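(* Let $k$ be an algebraically closed field of characteristic $p>2$, let $X$ be the smooth projective curve over $k$ with affine equation $y^2=x^p-x$, and $g=(p-1)/2$. Let $P_0=(0,0)$, let $P_\infty$ be the point at infinity, and let $\mathcal{U}=\{U_1,U_2\}$ with $U_1=X-P_0$, $U_2=X-P_\infty$. For $i=0,\dots,g-1$ let $\tau_i$ be the class of $(x^iy^{-1}dx,\;x^iy^{-1}dx,\;0)$ in $\check{H}^1_{dR}(\mathcal{U})$, and for $i=1,\dots,g$ let $\eta_i$ be the class of $$\big((1-2i)x^{1-g-i}\,d(yx^{-g-1}),\;-2ix^{2g-i}\,dy,\;yx^{-i}\big)$$ in $\check{H}^1_{dR}(\mathcal{U})$. Then these are well-defined elements, and $\{\tau_0,\dots,\tau_{g-1},\eta_1,\dots,\eta_g\}$ is a $k$-basis of $\check{H}^1_{dR}(\mathcal{U})$.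
   Context: $\check{H}^1_{dR}(\mathcal{U})$ (the Čech de Rham hypercohomology for the cover $\mathcal{U}$, canonically isomorphic to $H^1_{dR}(X/k)$) is the quotient of the $k$-vector space of triples $(\omega_1,\omega_2,f_{12})$ with $\omega_j\in\Omega^1_{X/k}(U_j)$, $f_{12}\in\mathcal{O}_X(U_1\cap U_2)$ and $df_{12}=\omega_1-\omega_2$, by the subspace of triples $(df_1,df_2,f_1-f_2)$ with $f_j\in\mathcal{O}_X(U_j)$. *)

theory Defs
  imports "HOL-Computational_Algebra.Computational_Algebra" "HOL-Library.Product_Plus"
begin

text \<open>The function field K = k(x)(y) is
  modelled as pairs (a,b) standing for a + b*y (K is a degree-2 extension of k(x)).
  Meromorphic 1-forms on X are h dx with h in K (dx is a K-basis of Omega_K);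
  a 1-form is represented by its dx-coefficient h.\<close>

type_synonym 'k rat = "'k poly fract"
type_synonym 'k fn = "'k rat \<times> 'k rat"

definition fx :: "'k::field rat" where "fx = Fract [:0,1:] 1"


text \<open>F = x^p - x, so y^2 = F.\<close>
definition fF :: "'k::field rat" where "fF = fx ^ CHAR('k) - fx"

definition fconst :: "'k::field \<Rightarrow> 'k rat" where "fconst c = Fract [:c:] 1"

definition fderiv :: "'k::field rat \<Rightarrow> 'k rat" where
  "fderiv r = (THE d. \<forall>p q. q \<noteq> 0 \<longrightarrow> r = Fract p q \<longrightarrow>
       d = Fract (pderiv p * q - p * pderiv q) (q * q))"

definition kconst :: "'k::field \<Rightarrow> 'k fn" where "kconst c = (fconst c, 0)"
definition kX :: "'k::field fn" where "kX = (fx, 0)"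
definition kY :: "'k::field fn" where "kY = (0, 1)"
definition kmul :: "'k::field fn \<Rightarrow> 'k fn \<Rightarrow> 'k fn" where
  "kmul u v = (fst u * fst v + snd u * snd v * fF, fst u * snd v + snd u * fst v)"
definition kinv :: "'k::field fn \<Rightarrow> 'k fn" where
  "kinv u = (let n = fst u ^ 2 - snd u ^ 2 * fF in (fst u / n, - snd u / n))"
definition ksmul :: "'k::field \<Rightarrow> 'k fn \<Rightarrow> 'k fn" where
  "ksmul c u = kmul (kconst c) u"

definition kpow :: "'k::field fn \<Rightarrow> nat \<Rightarrow> 'k fn" where
  "kpow u n = ((\<lambda>v. kmul u v) ^^ n) (1, 0)"
definition kpowi :: "'k::field fn \<Rightarrow> int \<Rightarrow> 'k fn" where
  "kpowi u n = (if n \<ge> 0 then kpow u (nat n) else kpow (kinv u) (nat (- n)))"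

text \<open>Exterior derivative d : K \<rightarrow> Omega_K, returned as dx-coefficient:
  d(a + b y) = (a' + (b' + b F'/(2F)) y) dx, using 2 y dy = F' dx.\<close>
definition kd :: "'k::field fn \<Rightarrow> 'k fn" where
  "kd u = (fderiv (fst u), fderiv (snd u) + snd u * fderiv fF / (2 * fF))"

datatype 'k pt = Aff 'k 'k | Inf

definition Xpts :: "'k::field pt set" where
  "Xpts = {Aff a b | a b. b ^ 2 = a ^ CHAR('k) - a} \<union> {Inf}"

text \<open>Affine coordinate ring k[x,y]/(y^2 - F): elements u0(x) + u1(x) y.\<close>
definition embA :: "'k::field poly \<times> 'k poly \<Rightarrow> 'k fn" where
  "embA u = (Fract (fst u) 1, Fract (snd u) 1)"
definition evalA :: "'k::field poly \<times> 'k poly \<Rightarrow> 'k \<Rightarrow> 'k \<Rightarrow> 'k" where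
  "evalA u a b = poly (fst u) a + poly (snd u) a * b"

text \<open>Chart at infinity: t = 1/x, s = y/x^(g+1), with s^2 = t - t^p; infinity is (t,s) = (0,0).\<close>
definition tInf :: "'k::field fn" where "tInf = kinv kX"
definition sInf :: "'k::field fn" where
  "sInf = kmul kY (kpow (kinv kX) ((CHAR('k) - 1) div 2 + 1))"
definition polyK :: "'k::field poly \<Rightarrow> 'k fn \<Rightarrow> 'k fn" where
  "polyK u z = foldr (\<lambda>c acc. kconst c + kmul z acc) (coeffs u) 0"
definition embB :: "'k::field poly \<times> 'k poly \<Rightarrow> 'k fn" where
  "embB u = polyK (fst u) tInf + kmul (polyK (snd u) tInf) sInf"

fun reg_at :: "'k::field pt \<Rightarrow> 'k fn \<Rightarrow> bool" where
  "reg_at (Aff a b) h = (\<exists>u v. evalA v a b \<noteq> 0 \<and> kmul h (embA v) = embA u)"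
| "reg_at Inf h = (\<exists>u v. poly (fst v) 0 \<noteq> 0 \<and> kmul h (embB v) = embB u)"

fun dreg_at :: "'k::field pt \<Rightarrow> 'k fn \<Rightarrow> bool" where
  "dreg_at (Aff a b) w = (\<exists>\<alpha> \<beta>. reg_at (Aff a b) \<alpha> \<and> reg_at (Aff a b) \<beta> \<and>
       w = kmul \<alpha> (kd kX) + kmul \<beta> (kd kY))"
| "dreg_at Inf w = (\<exists>\<alpha> \<beta>. reg_at Inf \<alpha> \<and> reg_at Inf \<beta> \<and>
       w = kmul \<alpha> (kd tInf) + kmul \<beta> (kd sInf))"

definition regO :: "'k::field pt set \<Rightarrow> 'k fn set" where
  "regO U = {h. \<forall>Q\<in>U. reg_at Q h}"
definition regOmega :: "'k::field pt set \<Rightarrow> 'k fn set" where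
  "regOmega U = {w. \<forall>Q\<in>U. dreg_at Q w}"

definition U1 :: "'k::field pt set" where "U1 = Xpts - {Aff 0 0}"
definition U2 :: "'k::field pt set" where "U2 = Xpts - {Inf}"

type_synonym 'k triple = "'k fn \<times> 'k fn \<times> 'k fn"

definition ZdR :: "'k::field triple set" where
  "ZdR = {(w1, w2, f12). w1 \<in> regOmega U1 \<and> w2 \<in> regOmega U2 \<and>
            f12 \<in> regO (U1 \<inter> U2) \<and> kd f12 = w1 - w2}"
definition BdR :: "'k::field triple set" where
  "BdR = {(kd f1, kd f2, f1 - f2) | f1 f2. f1 \<in> regO U1 \<and> f2 \<in> regO U2}"

definition tsmul :: "'k::field \<Rightarrow> 'k triple \<Rightarrow> 'k triple" where
  "tsmul c t = (ksmul c (fst t), ksmul c (fst (snd t)), ksmul c (snd (snd t)))"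

definition genus :: "'k::field itself \<Rightarrow> nat" where "genus _ = (CHAR('k) - 1) div 2"

definition tau :: "'k::field itself \<Rightarrow> nat \<Rightarrow> 'k triple" where
  "tau _ i = (let w = kmul (kpow kX i) (kinv kY) :: 'k fn in (w, w, 0))"

definition eta :: "'k::field itself \<Rightarrow> nat \<Rightarrow> 'k triple" where
  "eta K i = (let g = int (genus K); j = int i in
     (kmul (kconst (of_int (1 - 2 * j)))
        (kmul (kpowi kX (1 - g - j)) (kd (kmul kY (kpowi kX (- g - 1))))),
      kmul (kconst (of_int (- 2 * j))) (kmul (kpowi kX (2 * g - j)) (kd kY)),
      kmul kY (kpowi kX (- j)) :: 'k fn))"

end

theory Submission
  imports Defs
begin

lemma fx_def': "fx = to_fract [:0,1:]" by (simp add: fx_def to_fract_def)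
lemma fconst_def': "fconst c = to_fract [:c:]" by (simp add: fconst_def to_fract_def)

lemma fx_nz[simp]: "fx \<noteq> (0::'k::field rat)" by (simp add: fx_def')

lemma fderiv_consistent:
  fixes p q p1 q1 :: "'k::field poly"
  assumes "q \<noteq> 0" "q1 \<noteq> 0" "Fract p q = Fract p1 q1"
  shows "Fract (pderiv p * q - p * pderiv q) (q * q) = Fract (pderiv p1 * q1 - p1 * pderiv q1) (q1 * q1)"
proof -
  have E1: "p * q1 = p1 * q" using assms by (simp add: eq_fract)
  have E2: "pderiv p * q1 + p * pderiv q1 = pderiv p1 * q + p1 * pderiv q"
    using arg_cong[OF E1, of pderiv] by (simp add: pderiv_mult algebra_simps)
  have "(pderiv p * q - p * pderiv q) * (q1 * q1) = (pderiv p1 * q1 - p1 * pderiv q1) * (q * q)"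
  proof -
    have "(pderiv p * q - p * pderiv q) * (q1 * q1) - (pderiv p1 * q1 - p1 * pderiv q1) * (q * q)
       = q * q1 * (pderiv p * q1 + p * pderiv q1 - pderiv p1 * q - p1 * pderiv q)
         + (pderiv q1 * q + pderiv q * q1) * (p1 * q - p * q1)"
      by (simp add: algebra_simps)
    also have "\<dots> = 0" using E1 E2 by simp
    finally show ?thesis by simp
  qed
  thus ?thesis using assms by (simp add: eq_fract)
qed

lemma fderiv_Fract:
  fixes p q :: "'k::field poly"
  assumes "q \<noteq> 0"
  shows "fderiv (Fract p q) = Fract (pderiv p * q - p * pderiv q) (q * q)"
  unfolding fderiv_def
proof (rule the_equality)
  show "\<forall>p1 q1. q1 \<noteq> 0 \<longrightarrow> Fract p q = Fract p1 q1 \<longrightarrow>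
     Fract (pderiv p * q - p * pderiv q) (q * q) = Fract (pderiv p1 * q1 - p1 * pderiv q1) (q1 * q1)"
    using fderiv_consistent assms by blast
next
  fix d assume "\<forall>p1 q1. q1 \<noteq> 0 \<longrightarrow> Fract p q = Fract p1 q1 \<longrightarrow>
     d = Fract (pderiv p1 * q1 - p1 * pderiv q1) (q1 * q1)"
  thus "d = Fract (pderiv p * q - p * pderiv q) (q * q)" using assms by blast
qed

lemma fderiv_to_fract[simp]: "fderiv (to_fract p) = to_fract (pderiv p)"
  by (simp add: to_fract_def fderiv_Fract)

lemma fderiv_add: "fderiv (r + s) = fderiv r + fderiv (s::'k::field rat)"
proof (cases r; cases s)
  fix a b c d assume *: "r = Fract a b" "b \<noteq> 0" "s = Fract c d" "d \<noteq> 0"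
  show ?thesis using * by (simp add: fderiv_Fract pderiv_mult pderiv_add eq_fract algebra_simps)
qed

lemma fderiv_mult: "fderiv (r * s) = fderiv r * s + r * fderiv (s::'k::field rat)"
proof (cases r; cases s)
  fix a b c d assume *: "r = Fract a b" "b \<noteq> 0" "s = Fract c d" "d \<noteq> 0"
  show ?thesis using * by (simp add: fderiv_Fract pderiv_mult pderiv_add eq_fract algebra_simps)
qed

lemma fderiv_uminus: "fderiv (- r) = - fderiv (r::'k::field rat)"
proof (cases r)
  fix a b assume *: "r = Fract a b" "b \<noteq> 0"
  show ?thesis using * by (simp add: fderiv_Fract pderiv_minus eq_fract algebra_simps)
qed

lemma fderiv_diff: "fderiv (r - s) = fderiv r - fderiv (s::'k::field rat)"
  using fderiv_add[of r "-s"] by (simp add: fderiv_uminus)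

lemma fderiv_0[simp]: "fderiv 0 = (0::'k::field rat)"
  using fderiv_to_fract[of "0::'k poly"] by simp
lemma fderiv_1[simp]: "fderiv 1 = (0::'k::field rat)"
  using fderiv_to_fract[of "1::'k poly"] by simp
lemma fderiv_fconst[simp]: "fderiv (fconst c) = (0::'k::field rat)"
  by (simp add: fconst_def')
lemma fderiv_fx[simp]: "fderiv fx = (1::'k::field rat)"
  by (simp add: fx_def' pderiv_pCons flip: one_pCons)
lemma fderiv_of_nat[simp]: "fderiv (of_nat n) = (0::'k::field rat)"
  by (simp add: of_nat_fract fderiv_Fract flip: Zero_fract_def)

lemma fderiv_inverse: "fderiv (inverse r) = - fderiv r / (r*r::'k::field rat)"
proof (cases "r = 0")
  case True thus ?thesis by simp
next
  case False
  have "fderiv (r * inverse r) = 0" using False by simp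
  hence h: "fderiv r * inverse r + r * fderiv (inverse r) = 0" by (simp add: fderiv_mult)
  have "r * (fderiv r * inverse r + r * fderiv (inverse r)) = fderiv r + (r * r) * fderiv (inverse r)"
    using False by (simp add: algebra_simps)
  hence "fderiv r + (r * r) * fderiv (inverse r) = 0" using h by simp
  hence "(r * r) * fderiv (inverse r) = - fderiv r" by (simp add: eq_neg_iff_add_eq_0 add.commute)
  hence "fderiv (inverse r) * (r * r) = - fderiv r" by (simp add: mult.commute)
  hence "fderiv (inverse r) = - fderiv r / (r * r)" using False by (subst nonzero_eq_divide_eq) auto
  thus ?thesis by simp
qed

lemma fderiv_power: "fderiv (r ^ n) = of_nat n * r ^ (n - 1) * fderiv (r::'k::field rat)"
proof (induction n)
  case 0 then show ?case by simp
next
  case (Suc n)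
  then show ?case
    by (cases n) (simp_all add: fderiv_mult algebra_simps)
qed

lemma fderiv_power_int: "r \<noteq> 0 \<Longrightarrow> fderiv (r powi n) = of_int n * r powi (n - 1) * fderiv (r::'k::field rat)"
proof (cases "n \<ge> 0")
  case True
  assume r: "r \<noteq> 0"
  define m where "m = nat n"
  have m: "n = int m" using True m_def by simp
  show ?thesis
  proof (cases m)
    case 0 then show ?thesis using m by simp
  next
    case (Suc k)
    have "r powi (n - 1) = r ^ k" using m Suc by (simp flip: power_int_of_nat)
    moreover have "r powi n = r ^ Suc k" using m Suc by (simp only: power_int_of_nat)
    ultimately show ?thesis using m r Suc by (simp only: fderiv_power) simp
  qed
next
  case False
  assume r: "r \<noteq> 0"
  define m where "m = nat (- n)"
  have m: "n = - int m" "m > 0" using False m_def by auto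
  have e0: "r powi n = inverse (r ^ m)" using m by (simp add: power_int_minus)
  have e1: "r powi (n - 1) = inverse (r ^ (m + 1))"
  proof -
    have "n - 1 = - int (m + 1)" using m by simp
    thus ?thesis by (simp only: power_int_minus power_int_of_nat)
  qed
  have e2: "r ^ m * r ^ m = r ^ (m - 1) * r ^ (m+1)"
  proof -
    have "m + m = (m - 1) + (m + 1)" using m by simp
    thus ?thesis by (metis power_add)
  qed
  have nz: "r ^ (m - 1) \<noteq> 0" "r ^ (m + 1) \<noteq> 0" using r by auto
  have "fderiv (r powi n) = - (of_nat m * r ^ (m - 1) * fderiv r) / (r ^ m * r ^ m)"
    by (simp only: e0 fderiv_inverse fderiv_power)
  also have "\<dots> = (r ^ (m - 1) * (- of_nat m * fderiv r)) / (r ^ (m - 1) * r ^ (m+1))"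
    by (simp only: e2) (simp add: algebra_simps)
  also have "\<dots> = (- of_nat m * fderiv r) / r ^ (m+1)"
    by (rule nonzero_mult_divide_mult_cancel_left[OF nz(1)])
  also have "\<dots> = of_int n * inverse (r ^ (m + 1)) * fderiv r"
    using m by (simp add: divide_inverse)
  finally show ?thesis using e1 by simp
qed


lemma kmul_simp[simp]: "kmul (a,b) (c,d) = (a*c + b*d*fF, a*d + b*c)" by (simp add: kmul_def)
lemma kd_simp: "kd (a,b) = (fderiv a, fderiv b + b * fderiv fF / (2*fF))" by (simp add: kd_def)
lemma kconst_simp: "kconst c = (fconst c, 0)" by (simp add: kconst_def)
lemma ksmul_simp[simp]: "ksmul c (a,b) = (fconst c * a, fconst c * b)" by (simp add: ksmul_def kconst_def)
lemma kX_simp: "kX = (fx, 0)" by (simp add: kX_def)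
lemma kY_simp: "kY = (0, 1)" by (simp add: kY_def)

lemma fconst_0[simp]: "fconst 0 = (0::'k::field rat)" by (simp add: fconst_def')
lemma fconst_1[simp]: "fconst 1 = (1::'k::field rat)" by (simp add: fconst_def' flip: one_pCons)
lemma fconst_add: "fconst (a + b) = fconst a + (fconst b::'k::field rat)"
proof - have h: "[:a+b:] = [:a:] + [:b:]" by simp show ?thesis by (simp only: fconst_def' h to_fract_add to_fract_mult to_fract_uminus to_fract_diff) qed
lemma fconst_mult: "fconst (a * b) = fconst a * (fconst b::'k::field rat)"
proof - have h: "[:a*b:] = [:a:] * [:b:]" by simp show ?thesis by (simp only: fconst_def' h to_fract_add to_fract_mult to_fract_uminus to_fract_diff) qed
lemma fconst_uminus: "fconst (- a) = - (fconst a::'k::field rat)"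
proof - have h: "[:-a:] = - [:a:]" by simp show ?thesis by (simp only: fconst_def' h to_fract_add to_fract_mult to_fract_uminus to_fract_diff) qed
lemma fconst_diff: "fconst (a - b) = fconst a - (fconst b::'k::field rat)"
proof - have h: "[:a-b:] = [:a:] - [:b:]" by simp show ?thesis by (simp only: fconst_def' h to_fract_add to_fract_mult to_fract_uminus to_fract_diff) qed
lemma fconst_eq_0[simp]: "fconst a = (0::'k::field rat) \<longleftrightarrow> a = 0" by (simp add: fconst_def')
lemma fconst_of_nat: "fconst (of_nat n) = (of_nat n::'k::field rat)"
  by (induct n) (simp_all add: fconst_add)
lemma fconst_of_int: "fconst (of_int n) = (of_int n::'k::field rat)"
proof (cases "n \<ge> 0")
  case True
  then obtain m where "n = int m" using nonneg_eq_int by blast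
  thus ?thesis by (simp add: fconst_of_nat)
next
  case False
  then obtain m where "n = - int m" by (metis minus_minus nonneg_eq_int not_le neg_0_le_iff_le less_imp_le)
  thus ?thesis by (simp add: fconst_of_nat fconst_uminus)
qed

lemma kpow_real: "kpow (r, 0) n = (r ^ n, 0::'k::field rat)"
  by (induct n) (simp_all add: kpow_def)
lemma kinv_real: "kinv (r, 0) = (inverse r, 0::'k::field rat)"
  by (cases "r = 0") (simp_all add: kinv_def Let_def power2_eq_square field_simps)

lemma kpowi_real: "r \<noteq> 0 \<Longrightarrow> kpowi (r, 0) n = (r powi n, 0::'k::field rat)"
  by (simp add: kpowi_def kpow_real kinv_real power_int_def power_inverse)

lemma kpowi_kX: "kpowi kX n = (fx powi n, 0::'k::field rat)"
  by (simp add: kX_def kpowi_real)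

lemma kd_add: "kd (u + v) = kd u + (kd v :: 'k::field fn)"
  by (cases u; cases v) (simp add: kd_simp fderiv_add add_divide_distrib algebra_simps)
lemma kd_uminus: "kd (- u) = - (kd u :: 'k::field fn)"
  by (cases u) (simp add: kd_simp fderiv_uminus)
lemma kd_diff: "kd (u - v) = kd u - (kd v :: 'k::field fn)"
  by (cases u; cases v) (simp add: kd_simp fderiv_diff diff_divide_distrib algebra_simps)
lemma kd_zero[simp]: "kd 0 = (0 :: 'k::field fn)"
  by (simp add: kd_simp zero_prod_def)

lemma kd_kconst[simp]: "kd (kconst c) = (0::'k::field fn)"
  by (simp add: kconst_simp kd_simp zero_prod_def)

lemma kd_ksmul: "kd (ksmul c u) = ksmul c (kd (u :: 'k::field fn))"
  by (cases u) (simp add: kd_simp fderiv_mult algebra_simps)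

lemma kd_real: "kd (r, 0) = (fderiv r, 0::'k::field rat)"
  by (simp add: kd_simp)

lemma kd_kX: "kd kX = (1, 0::'k::field rat)" by (simp add: kX_def kd_simp)
lemma kd_kY: "kd kY = (0, fderiv fF / (2*fF)::'k::field rat)" by (simp add: kY_def kd_simp)

lemma ksmul_add: "ksmul c (u + v) = ksmul c u + ksmul c (v::'k::field fn)"
  by (cases u; cases v) (simp add: algebra_simps)
lemma ksmul_diff: "ksmul c (u - v) = ksmul c u - ksmul c (v::'k::field fn)"
  by (cases u; cases v) (simp add: algebra_simps)
lemma ksmul_0[simp]: "ksmul 0 u = (0::'k::field fn)"
  by (cases u) (simp add: zero_prod_def)
lemma ksmul_zero[simp]: "ksmul c 0 = (0::'k::field fn)"
  by (simp add: zero_prod_def)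

lemma fst_sum: "fst (sum f A) = sum (\<lambda>i. fst (f i)) A"
  by (induct A rule: infinite_finite_induct) auto
lemma snd_sum: "snd (sum f A) = sum (\<lambda>i. snd (f i)) A"
  by (induct A rule: infinite_finite_induct) auto

locale cv =
  fixes K :: "'k::alg_closed_field itself"
  assumes char_gt2: "CHAR('k) > 2"
begin

definition pp :: nat where "pp = CHAR('k)"
definition gg :: nat where "gg = (CHAR('k) - 1) div 2"

lemma genus_eq: "genus K = gg" by (simp add: genus_def gg_def)

lemma pp_prime: "prime pp" unfolding pp_def using char_gt2 by (intro prime_CHAR_semidom) simp

lemma pp_odd: "odd pp"
  using pp_prime char_gt2 unfolding pp_def by (metis prime_odd_nat)  

lemma pp_eq: "pp = 2 * gg + 1" using pp_odd unfolding gg_def pp_def by (simp add: odd_two_times_div_two_succ)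
lemma gg_pos: "gg \<ge> 1" using char_gt2 unfolding gg_def by simp

lemma two_nz: "(2::'k) \<noteq> 0"
proof
  assume "(2::'k) = 0"
  hence "of_nat 2 = (0::'k)" by simp
  hence "CHAR('k) dvd 2" by (simp only: of_nat_eq_0_iff_char_dvd)
  thus False using char_gt2 by (simp add: nat_dvd_not_less)
qed

lemma two_nz_rat: "(2::'k rat) \<noteq> 0"
proof -
  have "(2::'k rat) = fconst 2" using fconst_of_nat[of 2, where 'k='k] by simp
  thus ?thesis using two_nz fconst_eq_0[of "2::'k"] by metis
qed

lemma of_nat_pp_rat: "(of_nat pp :: 'k rat) = 0"
proof -
  have "(of_nat CHAR('k) :: 'k poly) = 0" using of_nat_CHAR[where 'a="'k poly"] by simp
  thus ?thesis by (simp add: pp_def of_nat_fract flip: Zero_fract_def)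
qed

definition Fp :: "'k poly" where "Fp = monom 1 pp - [:0,1:]"

lemma to_fract_power: "to_fract (x ^ n) = to_fract x ^ n" by (induct n) simp_all

lemma fF_eq: "fF = to_fract Fp"
  by (simp add: fF_def Fp_def fx_def' pp_def monom_altdef to_fract_power)

lemma degree_Fp: "degree Fp = pp"
proof -
  have "degree [:0,1::'k:] < degree (monom (1::'k) pp)" using char_gt2 by (simp add: pp_def degree_monom_eq)
  hence "degree (monom (1::'k) pp + - [:0,1:]) = pp" by (subst degree_add_eq_left) (simp_all add: degree_monom_eq)
  thus ?thesis unfolding Fp_def by (simp only: diff_conv_add_uminus)
qed

lemma Fp_nz: "Fp \<noteq> 0" using degree_Fp char_gt2 pp_def by auto
lemma fF_nz: "(fF::'k rat) \<noteq> 0" using Fp_nz by (simp add: fF_eq)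
lemma poly_Fp: "poly Fp a = a ^ CHAR('k) - a" by (simp add: Fp_def poly_monom pp_def)

lemma pderiv_Fp: "pderiv Fp = -1"
proof -
  have "(of_nat pp :: 'k) = 0" by (simp add: pp_def)
  thus ?thesis by (simp add: Fp_def pderiv_monom pderiv_diff pderiv_pCons) (simp add: one_pCons)
qed

lemma fderiv_fF: "fderiv (fF::'k rat) = -1"
  by (simp add: fF_eq pderiv_Fp)

lemma kd_kY': "kd kY = (0, -1 / (2 * fF::'k rat))"
  by (simp only: kd_kY fderiv_fF)

lemma key_identity: "of_nat (2 * (gg + 1)) * fF + fx = (fx ^ pp::'k rat)"
proof -
  have "2*(gg+1) = pp + 1" using pp_eq by simp
  hence "of_nat (2 * (gg + 1)) = (of_nat pp + 1 :: 'k rat)" by (simp only: of_nat_add of_nat_1)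
  hence "of_nat (2 * (gg + 1)) = (1 :: 'k rat)" using of_nat_pp_rat by simp
  thus ?thesis by (simp add: fF_def pp_def)
qed

definition ww :: "'k rat" where "ww = fderiv fF / (2 * fF)"
lemma ww_prop: "fderiv (fF::'k rat) = 2 * ww * fF" using fF_nz two_nz_rat by (simp add: ww_def)
lemma kd_simp': "kd (a,b) = (fderiv a, fderiv b + b * ww::'k rat)" by (simp add: kd_simp ww_def)

lemma kd_kmul: "kd (kmul u v) = kmul (kd u) v + kmul u (kd (v :: 'k fn))"
proof (cases u; cases v)
  fix a b c d assume *: "u = (a,b)" "v = (c,d)"
  have "fderiv (a * c + b * d * fF) = fderiv a * c + (fderiv b + b * ww) * d * fF + (a * fderiv c + b * (fderiv d + d * ww) * fF)"
    by (simp add: fderiv_add fderiv_mult ww_prop algebra_simps)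
  moreover have "fderiv (a * d + b * c) + (a * d + b * c) * ww = fderiv a * d + (fderiv b + b * ww) * c + (a * (fderiv d + d * ww) + b * fderiv c)"
    by (simp add: fderiv_add fderiv_mult algebra_simps)
  ultimately show ?thesis using * by (simp add: kd_simp')
qed

lemma kinv_kY: "kinv kY = (0, inverse fF::'k rat)"
  by (simp add: kY_def kinv_def Let_def power2_eq_square divide_inverse)

lemma tInf_eq: "tInf = (inverse fx, 0::'k rat)" by (simp add: tInf_def kX_def kinv_real)
lemma sInf_eq: "sInf = (0, fx powi (- int (gg + 1))::'k rat)"
proof -
  have "sInf = (0, inverse fx ^ (gg + 1)::'k rat)"
    by (simp add: sInf_def kX_def kinv_real kpow_real kY_def gg_def)
  moreover have "fx powi (- int (gg + 1)) = inverse (fx ^ (gg+1)::'k rat)"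
    by (simp only: power_int_minus power_int_of_nat)
  ultimately show ?thesis by (simp add: power_inverse)
qed

end

lemma kmul_comm: "kmul u v = kmul v (u::'k::field fn)"
  by (cases u; cases v) (simp add: algebra_simps)
lemma kmul_assoc: "kmul (kmul u v) w = kmul u (kmul v (w::'k::field fn))"
  by (cases u; cases v; cases w) (simp add: algebra_simps)
lemma kmul_add_left: "kmul (u + v) w = kmul u w + kmul v (w::'k::field fn)"
  by (cases u; cases v; cases w) (simp add: algebra_simps)
lemma kmul_add_right: "kmul w (u + v) = kmul w u + kmul w (v::'k::field fn)"
  by (cases u; cases v; cases w) (simp add: algebra_simps)
lemma kmul_diff_left: "kmul (u - v) w = kmul u w - kmul v (w::'k::field fn)"
  by (cases u; cases v; cases w) (simp add: algebra_simps)
lemma kmul_diff_right: "kmul w (u - v) = kmul w u - kmul w (v::'k::field fn)"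
  by (cases u; cases v; cases w) (simp add: algebra_simps)
lemma kmul_uminus_left: "kmul (- u) w = - kmul u (w::'k::field fn)"
  by (cases u; cases w) (simp add: algebra_simps)
lemma kmul_0_left[simp]: "kmul 0 w = (0::'k::field fn)"
  by (cases w) (simp add: zero_prod_def)
lemma kmul_0_right[simp]: "kmul w 0 = (0::'k::field fn)"
  by (cases w) (simp add: zero_prod_def)
lemma kmul_1_left[simp]: "kmul (1,0) w = (w::'k::field fn)"
  by (cases w) simp
lemma ksmul_kmul: "ksmul c u = kmul (fconst c, 0) u"
  by (simp add: ksmul_def kconst_def)
lemma kmul_ksmul_left: "kmul (ksmul c u) w = ksmul c (kmul u (w::'k::field fn))"
  by (simp add: ksmul_kmul kmul_assoc)

definition kconj :: "'k::field fn \<Rightarrow> 'k fn" where "kconj h = (fst h, - snd h)"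

definition nopole :: "'k::field \<Rightarrow> 'k rat \<Rightarrow> bool" where
  "nopole a r \<longleftrightarrow> (\<exists>n d. r = Fract n d \<and> poly d a \<noteq> 0)"

lemma nopole_to_fract[simp]: "nopole a (to_fract p)"
  unfolding nopole_def to_fract_def by (rule exI[of _ p], rule exI[of _ 1]) simp
lemma nopole_fconst[simp]: "nopole a (fconst c)" by (simp add: fconst_def')
lemma nopole_fx[simp]: "nopole a fx" by (simp add: fx_def')
lemma nopole_0[simp]: "nopole a 0" using nopole_to_fract[of a 0] by simp
lemma nopole_1[simp]: "nopole a 1" using nopole_to_fract[of a 1] by simp
lemma nopole_add: "nopole a r \<Longrightarrow> nopole a s \<Longrightarrow> nopole a (r + s)"
proof -
  assume "nopole a r" "nopole a s"
  then obtain n d n' d' where *: "r = Fract n d" "poly d a \<noteq> 0" "s = Fract n' d'" "poly d' a \<noteq> 0"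
    unfolding nopole_def by blast
  moreover have "d \<noteq> 0" "d' \<noteq> 0" using * by auto
  ultimately have "r + s = Fract (n * d' + n' * d) (d * d')" by simp
  thus ?thesis unfolding nopole_def using * by fastforce
qed
lemma nopole_mult: "nopole a r \<Longrightarrow> nopole a s \<Longrightarrow> nopole a (r * s)"
proof -
  assume "nopole a r" "nopole a s"
  then obtain n d n' d' where *: "r = Fract n d" "poly d a \<noteq> 0" "s = Fract n' d'" "poly d' a \<noteq> 0"
    unfolding nopole_def by blast
  hence "r * s = Fract (n * n') (d * d')" by auto
  thus ?thesis unfolding nopole_def using * by fastforce
qed
lemma nopole_uminus: "nopole a r \<Longrightarrow> nopole a (- r)"
  unfolding nopole_def by (metis minus_fract)
lemma nopole_diff: "nopole a r \<Longrightarrow> nopole a s \<Longrightarrow> nopole a (r - s)"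
  using nopole_add[of a r "-s"] nopole_uminus[of a s] by simp
lemma nopole_power: "nopole a r \<Longrightarrow> nopole a (r ^ n)"
  by (induct n) (simp_all add: nopole_mult)
lemma inverse_fx: "inverse fx = (Fract 1 [:0,1:] :: 'k::field rat)"
proof -
  have "fx * Fract 1 [:0,1:] = (1 :: 'k rat)" by (simp add: fx_def eq_fract One_fract_def)
  thus ?thesis by (rule inverse_unique)
qed
lemma nopole_inverse_fx: "a \<noteq> 0 \<Longrightarrow> nopole a (inverse fx)"
  unfolding nopole_def inverse_fx
  by (rule exI[of _ 1], rule exI[of _ "[:0,1:]"]) simp

lemma not_nopole:
  assumes "r = Fract n d" "poly d a = 0" "poly n a \<noteq> 0" and dnz: "d \<noteq> 0"
  shows "\<not> nopole a r"
proof
  assume "nopole a r"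
  then obtain n1 d1 where 1: "r = Fract n1 d1" "poly d1 a \<noteq> 0" unfolding nopole_def by blast
  have nnz: "n \<noteq> 0" using assms(3) by auto
  have d1nz: "d1 \<noteq> 0" using 1 by auto
  have eq: "n * d1 = n1 * d" using 1 assms(1) dnz d1nz by (simp add: eq_fract)
  have "order a (n * d1) = 0" using assms(3) 1(2) by (simp add: order_0I)
  moreover have "n * d1 \<noteq> 0" using nnz d1nz by simp
  hence "n1 \<noteq> 0" using eq by auto
  hence "order a (n1 * d) = order a n1 + order a d" using dnz by (simp add: order_mult)
  moreover have "order a d \<noteq> 0" using assms(2) dnz by (simp add: order_root)
  ultimately show False using eq by simp
qed

lemma nopole_cancel: "nopole a r \<Longrightarrow> r = Fract n d \<Longrightarrow> d \<noteq> 0 \<Longrightarrow> poly d a = 0 \<Longrightarrow> poly n a = 0"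
  using not_nopole by blast

lemma reduced_at:
  fixes r :: "'k::field rat"
  assumes "r \<noteq> 0"
  shows "\<exists>n d. r = Fract n d \<and> d \<noteq> 0 \<and> (poly n a \<noteq> 0 \<or> poly d a \<noteq> 0)"
proof -
  obtain n d where nd: "r = Fract n d" "d \<noteq> 0" by (cases r) auto
  have nnz: "n \<noteq> 0" using nd assms by (auto simp: fract_collapse)
  define k where "k = min (order a n) (order a d)"
  obtain n' where n': "n = [:-a,1:] ^ order a n * n'" "\<not> [:-a,1:] dvd n'" using order_decomp[OF nnz] by blast
  obtain d' where d': "d = [:-a,1:] ^ order a d * d'" "\<not> [:-a,1:] dvd d'" using order_decomp[OF nd(2)] by blast
  define n'' d'' where "n'' = [:-a,1:] ^ (order a n - k) * n'" and "d'' = [:-a,1:] ^ (order a d - k) * d'"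
  have "n = [:-a,1:] ^ k * n''" "d = [:-a,1:] ^ k * d''"
    using n' d' by (simp_all add: n''_def d''_def k_def mult.assoc[symmetric] flip: power_add)
  hence "r = Fract n'' d''" using nd by (simp add: mult_fract_cancel)
  moreover have "d'' \<noteq> 0" using nd d' d''_def by auto
  moreover have "poly n'' a \<noteq> 0 \<or> poly d'' a \<noteq> 0"
  proof (cases "order a n \<le> order a d")
    case True
    hence "n'' = n'" by (simp add: n''_def k_def)
    thus ?thesis using n'(2) by (simp add: dvd_iff_poly_eq_0)
  next
    case False
    hence "d'' = d'" by (simp add: d''_def k_def)
    thus ?thesis using d'(2) by (simp add: dvd_iff_poly_eq_0)
  qed
  ultimately show ?thesis by blast
qed


lemma embA_eq: "embA u = (to_fract (fst u), to_fract (snd u))" by (simp add: embA_def to_fract_def)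
lemma embA_add: "embA (u + v) = embA u + embA v" by (simp add: embA_eq)
lemma embA_uminus: "embA (- u) = - embA u" by (simp add: embA_eq)
lemma embA_1: "embA (1, 0) = (1, 0::'k::field rat)" by (simp add: embA_eq)

lemma kconj_kmul: "kconj (kmul u v) = kmul (kconj u) (kconj (v::'k::field fn))"
  by (cases u; cases v) (simp add: kconj_def)
lemma kconj_add: "kconj (u + v) = kconj u + kconj (v::'k::field fn)"
  by (cases u; cases v) (simp add: kconj_def)

context cv begin

definition amul :: "'k poly \<times> 'k poly \<Rightarrow> 'k poly \<times> 'k poly \<Rightarrow> 'k poly \<times> 'k poly" where
  "amul u v = (fst u * fst v + snd u * snd v * Fp, fst u * snd v + snd u * fst v)"

lemma embA_amul: "embA (amul u v) = kmul (embA u) (embA v)"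
  by (simp add: amul_def embA_eq fF_eq)

definition onc :: "'k \<Rightarrow> 'k \<Rightarrow> bool" where "onc a b \<longleftrightarrow> b ^ 2 = a ^ CHAR('k) - a"

lemma evalA_amul: "onc a b \<Longrightarrow> evalA (amul u v) a b = evalA u a b * evalA v a b"
proof -
  assume "onc a b"
  hence F: "poly Fp a = b * b" by (simp add: onc_def poly_Fp power2_eq_square)
  show ?thesis by (simp add: amul_def evalA_def F algebra_simps)
qed

lemma onc_neg: "onc a b \<Longrightarrow> onc a (-b)" by (simp add: onc_def)

lemma reg_aff_add: assumes "onc a b" "reg_at (Aff a b) h" "reg_at (Aff a b) h'"
  shows "reg_at (Aff a b) (h + h')"
proof -
  obtain u v where 1: "evalA v a b \<noteq> 0" "kmul h (embA v) = embA u" using assms(2) by auto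
  obtain u' v' where 2: "evalA v' a b \<noteq> 0" "kmul h' (embA v') = embA u'" using assms(3) by auto
  have "evalA (amul v v') a b \<noteq> 0" using 1 2 assms(1) by (simp add: evalA_amul)
  moreover have "kmul (h + h') (embA (amul v v')) = embA (amul u v' + amul u' v)"
  proof -
    have "kmul (h + h') (embA (amul v v')) = kmul (kmul h (embA v)) (embA v') + kmul (kmul h' (embA v')) (embA v)"
      by (simp add: embA_amul kmul_add_left kmul_assoc) (metis kmul_comm)
    thus ?thesis using 1 2 by (simp add: embA_add embA_amul)
  qed
  ultimately show ?thesis by (simp only: reg_at.simps) blast
qed

lemma reg_aff_mult: assumes "onc a b" "reg_at (Aff a b) h" "reg_at (Aff a b) h'"
  shows "reg_at (Aff a b) (kmul h h')"
proof -
  obtain u v where 1: "evalA v a b \<noteq> 0" "kmul h (embA v) = embA u" using assms(2) by auto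
  obtain u' v' where 2: "evalA v' a b \<noteq> 0" "kmul h' (embA v') = embA u'" using assms(3) by auto
  have "evalA (amul v v') a b \<noteq> 0" using 1 2 assms(1) by (simp add: evalA_amul)
  moreover have "kmul (kmul h h') (embA (amul v v')) = embA (amul u u')"
  proof -
    have "kmul (kmul h h') (embA (amul v v')) = kmul (kmul h (embA v)) (kmul h' (embA v'))"
      by (simp add: embA_amul kmul_assoc) (metis kmul_comm kmul_assoc)
    thus ?thesis using 1 2 by (simp add: embA_amul)
  qed
  ultimately show ?thesis by (simp only: reg_at.simps) blast
qed

lemma reg_aff_uminus: assumes "reg_at (Aff a b) h" shows "reg_at (Aff a b) (- h)"
proof -
  obtain u v where 1: "evalA v a b \<noteq> 0" "kmul h (embA v) = embA u" using assms by auto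
  have "kmul (- h) (embA v) = embA (- u)" using 1 by (simp add: kmul_uminus_left embA_uminus)
  thus ?thesis using 1 by (simp only: reg_at.simps) blast
qed

lemma reg_aff_diff: "onc a b \<Longrightarrow> reg_at (Aff a b) h \<Longrightarrow> reg_at (Aff a b) h' \<Longrightarrow> reg_at (Aff a b) (h - h')"
  using reg_aff_add[of a b h "- h'"] reg_aff_uminus[of a b h'] by simp

lemma reg_aff_conj: assumes "reg_at (Aff a b) h" shows "reg_at (Aff a (-b)) (kconj h)"
proof -
  obtain u v where 1: "evalA v a b \<noteq> 0" "kmul h (embA v) = embA u" using assms by auto
  have "evalA (fst v, - snd v) a (-b) \<noteq> 0" using 1 by (simp add: evalA_def)
  moreover have "kmul (kconj h) (embA (fst v, - snd v)) = embA (fst u, - snd u)"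
  proof -
    have "kmul (kconj h) (embA (fst v, - snd v)) = kconj (kmul h (embA v))"
      by (cases h) (simp add: embA_eq kconj_def)
    thus ?thesis using 1 by (simp add: embA_eq kconj_def)
  qed
  ultimately show ?thesis by (simp only: reg_at.simps) blast
qed

lemma reg_aff_nopole: assumes "nopole a r1" "nopole a r2" shows "reg_at (Aff a b) (r1, r2)"
proof -
  obtain n1 d1 where 1: "r1 = Fract n1 d1" "poly d1 a \<noteq> 0" using assms(1) unfolding nopole_def by blast
  obtain n2 d2 where 2: "r2 = Fract n2 d2" "poly d2 a \<noteq> 0" using assms(2) unfolding nopole_def by blast
  have nz: "d1 \<noteq> 0" "d2 \<noteq> 0" using 1 2 by auto
  have "evalA (d1 * d2, 0) a b \<noteq> 0" using 1 2 by (simp add: evalA_def)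
  moreover have "kmul (r1, r2) (embA (d1 * d2, 0)) = embA (n1 * d2, n2 * d1)"
    using 1 2 nz by (simp add: embA_eq Fract_conv_to_fract)
  ultimately show ?thesis by (simp only: reg_at.simps) blast
qed

lemma reg_aff_real_nopole: assumes "reg_at (Aff a b) (q, 0)" shows "nopole a q"
proof -
  obtain u v where 1: "evalA v a b \<noteq> 0" "kmul (q, 0) (embA v) = embA u" using assms by auto
  hence e0: "q * to_fract (fst v) = to_fract (fst u)" and e1: "q * to_fract (snd v) = to_fract (snd u)"
    by (simp_all add: embA_eq)
  show ?thesis
  proof (cases "poly (fst v) a = 0")
    case False
    hence "fst v \<noteq> 0" by auto
    hence "q = Fract (fst u) (fst v)" using e0 by (simp add: Fract_conv_to_fract eq_divide_eq)
    thus ?thesis using False unfolding nopole_def by blast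
  next
    case True
    hence "poly (snd v) a \<noteq> 0" using 1 by (auto simp: evalA_def)
    moreover hence "snd v \<noteq> 0" by auto
    hence "q = Fract (snd u) (snd v)" using e1 by (simp add: Fract_conv_to_fract eq_divide_eq)
    ultimately show ?thesis unfolding nopole_def by blast
  qed
qed

lemma order_Fp_le: "order a Fp \<le> 1"
proof (rule ccontr)
  assume "\<not> order a Fp \<le> 1"
  hence "[:-a,1:] ^ 2 dvd Fp" using Fp_nz by (simp add: order_divides)
  then obtain q where q: "Fp = [:-a,1:] ^ 2 * q" by (auto elim: dvdE)
  hence Fq: "Fp = [:-a,1:] * ([:-a,1:] * q)" by (simp only: power2_eq_square mult.assoc)
  have "poly (pderiv ([:-a,1:] * ([:-a,1:] * q))) a = 0"
    by (simp only: pderiv_mult poly_add poly_mult) simp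
  hence "poly (pderiv Fp) a = 0" using Fq by simp
  thus False by (simp add: pderiv_Fp)
qed

lemma sq_nopole: fixes r :: "'k rat" assumes "nopole a (r * r * fF)" shows "nopole a r"
proof (cases "r = 0")
  case True thus ?thesis by simp
next
  case False
  obtain n d where nd: "r = Fract n d" "d \<noteq> 0" "poly n a \<noteq> 0 \<or> poly d a \<noteq> 0"
    using reduced_at[OF False] by blast
  show ?thesis
  proof (rule ccontr)
    assume nr: "\<not> nopole a r"
    have da: "poly d a = 0" using nr nd unfolding nopole_def by blast
    have na: "poly n a \<noteq> 0" using nd da by blast
    obtain N D where ND: "r * r * fF = Fract N D" "poly D a \<noteq> 0" using assms unfolding nopole_def by blast
    have Dnz: "D \<noteq> 0" using ND by auto
    have dnz: "d \<noteq> 0" by (rule nd(2))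
    have "r * r * fF = Fract (n * n * Fp) (d * d)" using nd by (simp add: fF_eq to_fract_def)
    hence eq: "n * n * Fp * D = N * (d * d)" using ND dnz Dnz by (simp add: eq_fract)
    have nnz: "n \<noteq> 0" using na by auto
    have lhsnz: "n * n * Fp * D \<noteq> 0" using nnz Fp_nz Dnz by simp
    hence Nnz: "N \<noteq> 0" using eq by auto
    have "order a (n * n * Fp * D) = order a n + order a n + order a Fp + order a D"
      using nnz Fp_nz Dnz by (simp add: order_mult)
    also have "\<dots> = order a Fp" using na ND(2) by (simp add: order_0I)
    finally have o1: "order a (n * n * Fp * D) \<le> 1" using order_Fp_le by simp
    have "order a (N * (d * d)) = order a N + order a d + order a d"
      using Nnz dnz by (simp add: order_mult)
    moreover have "order a d \<ge> 1" using da dnz by (simp add: order_root Suc_le_eq)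
    ultimately have "order a (N * (d * d)) \<ge> 2" by simp
    thus False using o1 eq by simp
  qed
qed

lemma aff_char: assumes "onc a b" "reg_at (Aff a b) h" "reg_at (Aff a (-b)) h"
  shows "nopole a (fst h) \<and> nopole a (snd h)"
proof -
  obtain r1 r2 where h: "h = (r1, r2)" by (cases h)
  have c: "reg_at (Aff a b) (kconj h)" using reg_aff_conj[OF assms(3)] by simp
  have "reg_at (Aff a b) (h + kconj h)" using reg_aff_add[OF assms(1) assms(2) c] .
  hence "reg_at (Aff a b) (2 * r1, 0)" using h by (simp add: kconj_def)
  hence n1: "nopole a (2 * r1)" by (rule reg_aff_real_nopole)
  have two: "(2::'k rat) = fconst 2" using fconst_of_nat[of 2, where 'k='k] by simp
  have "fconst (inverse 2) * (2::'k rat) = 1" using two two_nz by (metis fconst_mult fconst_1 left_inverse)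
  hence "r1 = fconst (inverse 2) * (2 * r1)" by (metis mult.assoc mult_1)
  hence "nopole a r1" using n1 nopole_mult[OF nopole_fconst n1] by metis
  moreover
  have "reg_at (Aff a b) (h - kconj h)" using reg_aff_diff[OF assms(1) assms(2) c] .
  hence "reg_at (Aff a b) (kmul (h - kconj h) (h - kconj h))" using reg_aff_mult assms(1) by blast
  hence "reg_at (Aff a b) (4 * (r2 * r2 * fF), 0)" using h by (simp add: kconj_def algebra_simps)
  hence n2: "nopole a (4 * (r2 * r2 * fF))" by (rule reg_aff_real_nopole)
  have four: "(4::'k rat) = fconst 4" using fconst_of_nat[of 4, where 'k='k] by simp
  have "(4::'k) = 2 * 2" by simp
  hence "(4::'k) \<noteq> 0" using two_nz by (metis mult_eq_0_iff)
  hence "fconst (inverse 4) * (4::'k rat) = 1" using four by (metis fconst_mult fconst_1 left_inverse)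
  hence "r2 * r2 * fF = fconst (inverse 4) * (4 * (r2 * r2 * fF))" by (metis mult.assoc mult_1)
  hence "nopole a (r2 * r2 * fF)" using nopole_mult[OF nopole_fconst n2] by metis
  hence "nopole a r2" by (rule sq_nopole)
  ultimately show ?thesis using h by simp
qed

end

lemma to_fract_x_power: "to_fract ([:0,1:] ^ m) = (fx ^ m :: 'k::field rat)"
  by (induct m) (simp_all only: power_Suc power_0 to_fract_mult to_fract_1 fx_def')

lemma den_monom_aux:
  fixes d :: "'k::alg_closed_field poly"
  shows "d \<noteq> 0 \<Longrightarrow> (\<forall>a. a \<noteq> 0 \<longrightarrow> nopole a (Fract n d)) \<Longrightarrow> \<exists>n' m. Fract n d = to_fract n' / fx ^ m"
proof (induction "degree d" arbitrary: n d rule: less_induct)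
  case less
  show ?case
  proof (cases "\<exists>c. c \<noteq> 0 \<and> poly d c = 0")
    case True
    then obtain c where c: "c \<noteq> 0" "poly d c = 0" by blast
    have "poly n c = 0" using less.prems c nopole_cancel by blast
    then obtain n1 where n1: "n = [:-c,1:] * n1" using poly_eq_0_iff_dvd by (metis dvdE)
    obtain d1 where d1: "d = [:-c,1:] * d1" using c poly_eq_0_iff_dvd by (metis dvdE)
    have d1nz: "d1 \<noteq> 0" using d1 less.prems by auto
    have Lnz: "[:-c,1:] \<noteq> 0" by simp
    have fr: "Fract n d = Fract n1 d1" by (simp only: n1 d1 mult_fract_cancel[OF Lnz])
    have "degree d = degree [:-c,1:] + degree d1" unfolding d1 using d1nz by (intro degree_mult_eq) simp_all
    hence "degree d = degree d1 + 1" by simp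
    hence "degree d1 < degree d" by simp
    thus ?thesis using less.hyps[of d1 n1] d1nz less.prems(2) fr by metis
  next
    case False
    obtain q where q: "d = [:-0,1:] ^ order 0 d * q" "\<not> [:-0,1:] dvd q" using order_decomp[OF less.prems(1)] by blast
    have qnz: "q \<noteq> 0" using q less.prems(1) by auto
    have "\<forall>c. poly q c \<noteq> 0"
    proof
      fix c show "poly q c \<noteq> 0"
      proof (cases "c = 0")
        case True thus ?thesis using q(2) by (simp add: dvd_iff_poly_eq_0)
      next
        case c: False
        have "poly d c \<noteq> 0" using False c by blast
        moreover have "poly d c = poly ([:-0,1:] ^ order 0 d) c * poly q c" using q(1) by (metis poly_mult)
        ultimately show ?thesis by auto
      qed
    qed
    hence "degree q = 0" using alg_closed_imp_poly_has_root by (metis neq0_conv)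
    then obtain q0 where q0: "q = [:q0:]" by (metis degree_eq_zeroE)
    have q0nz: "q0 \<noteq> 0" using q0 qnz by auto
    define k where "k = order 0 d"
    have "d = [:0,1:] ^ k * [:q0:]" using q q0 k_def by simp
    hence td: "to_fract d = fx ^ k * fconst q0" by (simp only: to_fract_mult to_fract_x_power fconst_def')
    have "smult (inverse q0) n = [:inverse q0:] * n" by simp
    hence tn: "to_fract (smult (inverse q0) n) = fconst (inverse q0) * to_fract n" by (simp only: to_fract_mult fconst_def')
    have inv: "fconst (inverse q0) * fconst q0 = (1::'k rat)" using q0nz by (simp flip: fconst_mult)
    have fq: "fconst q0 \<noteq> (0::'k rat)" using q0nz by simp
    have "Fract n d = to_fract n / (fx ^ k * fconst q0)" by (simp only: Fract_conv_to_fract td)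
    also have "\<dots> = fconst (inverse q0) * to_fract n / fx ^ k"
      using inv fq by (simp add: field_simps)
    finally have "Fract n d = to_fract (smult (inverse q0) n) / fx ^ order 0 d" using tn k_def by simp
    thus ?thesis by blast
  qed
qed

lemma den_monom:
  fixes r :: "'k::alg_closed_field rat"
  assumes "\<forall>a. a \<noteq> 0 \<longrightarrow> nopole a r"
  shows "\<exists>n m. r = to_fract n / fx ^ m"
proof -
  obtain n d where "r = Fract n d" "d \<noteq> 0" by (cases r) auto
  thus ?thesis using den_monom_aux assms by blast
qed

lemma den_one_aux:
  fixes n :: "'k::field poly"
  shows "nopole 0 (to_fract n / fx ^ m) \<Longrightarrow> \<exists>n'. to_fract n / fx ^ m = to_fract n'"
proof (induction m arbitrary: n)
  case 0 thus ?case by auto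
next
  case (Suc m)
  have "to_fract n / fx ^ Suc m = Fract n ([:0,1:] ^ Suc m)"
    by (simp only: Fract_conv_to_fract to_fract_x_power)
  hence "poly n 0 = 0" using Suc.prems nopole_cancel[of 0 _ n "[:0,1:] ^ Suc m"] by simp
  then obtain n1 where n1: "n = [:0,1:] * n1" by (metis dvd_iff_poly_eq_0 dvdE minus_zero)
  have "to_fract n = fx * to_fract n1" using n1 by (simp only: fx_def' to_fract_mult)
  hence "to_fract n / fx ^ Suc m = (fx * to_fract n1) / (fx * fx ^ m)" by simp
  also have "\<dots> = to_fract n1 / fx ^ m" by (rule mult_divide_mult_cancel_left) simp
  finally have "to_fract n / fx ^ Suc m = to_fract n1 / fx ^ m" .
  thus ?case using Suc.IH Suc.prems by metis
qed

lemma den_one: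
  fixes r :: "'k::alg_closed_field rat"
  assumes "\<forall>a. nopole a r"
  shows "\<exists>n. r = to_fract n"
  using den_monom[of r] assms den_one_aux by metis

context cv begin

lemma onc_exists: "\<exists>b. onc a b"
  unfolding onc_def using nth_root_exists[of 2 "a ^ CHAR('k) - a"] by auto

lemma Aff_in_Xpts: "Aff a b \<in> Xpts \<longleftrightarrow> onc a b" by (simp add: Xpts_def onc_def)

lemma laurent_of_reg:
  assumes "\<forall>a b. onc a b \<and> a \<noteq> 0 \<longrightarrow> reg_at (Aff a b) h"
  shows "\<exists>A B m. h = (to_fract A / fx ^ m, to_fract B / fx ^ m)"
proof -
  have np: "nopole a (fst h) \<and> nopole a (snd h)" if "a \<noteq> 0" for a
  proof -
    obtain b where b: "onc a b" using onc_exists by blast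
    show ?thesis using aff_char[OF b] assms b onc_neg[OF b] that by blast
  qed
  obtain A m1 where 1: "fst h = to_fract A / fx ^ m1" using den_monom np by blast
  obtain B m2 where 2: "snd h = to_fract B / fx ^ m2" using den_monom np by blast
  have "fst h = to_fract (A * [:0,1:] ^ m2) / fx ^ (m1 + m2)"
    using 1 by (simp add: to_fract_x_power power_add)
  moreover have "snd h = to_fract (B * [:0,1:] ^ m1) / fx ^ (m1 + m2)"
    using 2 by (simp add: to_fract_x_power power_add)
  ultimately show ?thesis by (metis prod.collapse)
qed

lemma poly_of_reg:
  assumes "\<forall>a b. onc a b \<longrightarrow> reg_at (Aff a b) h"
  shows "\<exists>A B. h = (to_fract A, to_fract B)"
proof -
  have np: "nopole a (fst h) \<and> nopole a (snd h)" for a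
  proof -
    obtain b where b: "onc a b" using onc_exists by blast
    show ?thesis using aff_char[OF b] assms b onc_neg[OF b] by blast
  qed
  obtain A where 1: "fst h = to_fract A" using den_one np by blast
  obtain B where 2: "snd h = to_fract B" using den_one np by blast
  show ?thesis using 1 2 by (metis prod.collapse)
qed

lemma nopole_laurent: "a \<noteq> 0 \<Longrightarrow> nopole a (to_fract A / fx ^ m)"
proof -
  assume a: "a \<noteq> 0"
  have "to_fract A / fx ^ m = to_fract A * inverse fx ^ m" by (simp add: divide_inverse power_inverse)
  thus ?thesis using a by (simp add: nopole_mult nopole_power nopole_inverse_fx)
qed

end

definition fdeg :: "'k::field rat \<Rightarrow> int" where
  "fdeg r = (SOME e. \<exists>n d. r = Fract n d \<and> n \<noteq> 0 \<and> d \<noteq> 0 \<and> e = int (degree n) - int (degree d))"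

lemma fdeg_Fract:
  fixes n d :: "'k::field poly"
  assumes "n \<noteq> 0" "d \<noteq> 0"
  shows "fdeg (Fract n d) = int (degree n) - int (degree d)"
  unfolding fdeg_def
proof (rule some_equality)
  show "\<exists>n' d'. Fract n d = Fract n' d' \<and> n' \<noteq> 0 \<and> d' \<noteq> 0 \<and> int (degree n) - int (degree d) = int (degree n') - int (degree d')"
    using assms by blast
next
  fix e assume "\<exists>n' d'. Fract n d = Fract n' d' \<and> n' \<noteq> 0 \<and> d' \<noteq> 0 \<and> e = int (degree n') - int (degree d')"
  then obtain n' d' where *: "Fract n d = Fract n' d'" "n' \<noteq> 0" "d' \<noteq> 0" "e = int (degree n') - int (degree d')" by blast
  hence "n * d' = n' * d" using assms by (simp add: eq_fract)
  hence "degree (n * d') = degree (n' * d)" by simp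
  hence "degree n + degree d' = degree n' + degree d" using assms * by (simp add: degree_mult_eq)
  thus "e = int (degree n) - int (degree d)" using * by simp
qed

lemma fract_rep_nz:
  fixes r :: "'k::field rat"
  assumes "r \<noteq> 0" obtains n d where "r = Fract n d" "n \<noteq> 0" "d \<noteq> 0"
proof -
  obtain n d where "r = Fract n d" "d \<noteq> 0" by (cases r) auto
  moreover hence "n \<noteq> 0" using assms by (auto simp: fract_collapse)
  ultimately show ?thesis using that by blast
qed

lemma fdeg_mult: "r \<noteq> 0 \<Longrightarrow> s \<noteq> 0 \<Longrightarrow> fdeg (r * s) = fdeg r + fdeg (s::'k::field rat)"
proof -
  assume r: "r \<noteq> 0" and s: "s \<noteq> 0"
  obtain n d where 1: "r = Fract n d" "n \<noteq> 0" "d \<noteq> 0" using fract_rep_nz[OF r] by blast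
  obtain n' d' where 2: "s = Fract n' d'" "n' \<noteq> 0" "d' \<noteq> 0" using fract_rep_nz[OF s] by blast
  show ?thesis using 1 2 by (simp add: fdeg_Fract degree_mult_eq)
qed

lemma fdeg_to_fract: "p \<noteq> 0 \<Longrightarrow> fdeg (to_fract p) = int (degree p)"
  by (simp add: to_fract_def fdeg_Fract)

lemma fdeg_inverse: "r \<noteq> 0 \<Longrightarrow> fdeg (inverse r) = - fdeg (r::'k::field rat)"
proof -
  assume r: "r \<noteq> 0"
  have f1: "fdeg (1::'k rat) = 0" using fdeg_to_fract[of "1::'k poly"] by simp
  have "inverse r \<noteq> 0" using r by simp
  hence "fdeg (inverse r) + fdeg r = fdeg (inverse r * r)" using r by (rule fdeg_mult[symmetric])
  also have "inverse r * r = 1" using r by simp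
  finally show ?thesis using f1 by simp
qed

lemma fdeg_fx: "fdeg (fx::'k::field rat) = 1" by (simp add: fx_def' fdeg_to_fract)
lemma fdeg_fconst: "c \<noteq> 0 \<Longrightarrow> fdeg (fconst c :: 'k::field rat) = 0" by (simp add: fconst_def' fdeg_to_fract)

lemma fdeg_power: "r \<noteq> 0 \<Longrightarrow> fdeg (r ^ n) = int n * fdeg (r::'k::field rat)"
  by (induct n) (simp_all add: fdeg_mult fdeg_to_fract[of 1, simplified] algebra_simps)

lemma fdeg_powi: "r \<noteq> 0 \<Longrightarrow> fdeg (r powi n) = n * fdeg (r::'k::field rat)"
  by (cases "n \<ge> 0") (auto simp: power_int_def fdeg_power fdeg_inverse)

lemma fdeg_fx_powi: "fdeg (fx powi n :: 'k::field rat) = n" by (simp add: fdeg_powi fdeg_fx)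

definition binf :: "int \<Rightarrow> 'k::field rat \<Rightarrow> bool" where "binf N r \<longleftrightarrow> r = 0 \<or> fdeg r \<le> N"

lemma binf_0[simp]: "binf N 0" by (simp add: binf_def)
lemma binf_mono: "binf N r \<Longrightarrow> N \<le> M \<Longrightarrow> binf M r" by (auto simp: binf_def)
lemma binf_mult: "binf N r \<Longrightarrow> binf M s \<Longrightarrow> binf (N + M) (r * s)"
  by (cases "r = 0 \<or> s = 0") (auto simp: binf_def fdeg_mult)
lemma binf_uminus: "binf N (- r) \<longleftrightarrow> binf N r"
proof -
  have "fdeg (- r) = fdeg r" if "r \<noteq> 0" for r :: "'a::field rat"
  proof -
    have "- r = fconst (-1) * r" by (simp add: fconst_uminus)
    thus ?thesis using that by (simp add: fdeg_mult fdeg_fconst)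
  qed
  thus ?thesis by (cases "r = 0") (auto simp: binf_def)
qed
lemma binf_add: "binf N r \<Longrightarrow> binf N s \<Longrightarrow> binf N (r + s)"
proof -
  assume br: "binf N r" and bs: "binf N s"
  show ?thesis
  proof (cases "r = 0 \<or> s = 0 \<or> r + s = 0")
    case True thus ?thesis using br bs by auto
  next
    case False
    obtain n d where 1: "r = Fract n d" "n \<noteq> 0" "d \<noteq> 0" using fract_rep_nz False by blast
    obtain n' d' where 2: "s = Fract n' d'" "n' \<noteq> 0" "d' \<noteq> 0" using fract_rep_nz False by blast
    have sum: "r + s = Fract (n * d' + n' * d) (d * d')" using 1 2 by simp
    hence nz: "n * d' + n' * d \<noteq> 0" using False by (auto simp: fract_collapse)
    have "degree (n * d' + n' * d) \<le> max (degree (n * d')) (degree (n' * d))" by (rule degree_add_le_max)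
    hence "int (degree (n * d' + n' * d)) \<le> max (int (degree n) + int (degree d')) (int (degree n') + int (degree d))"
      using 1 2 by (simp add: degree_mult_eq)
    hence "fdeg (r + s) \<le> max (fdeg r) (fdeg s)" using sum 1 2 nz by (simp add: fdeg_Fract degree_mult_eq)
    thus ?thesis using br bs False by (auto simp: binf_def)
  qed
qed
lemma binf_diff: "binf N r \<Longrightarrow> binf N s \<Longrightarrow> binf N (r - s)"
  using binf_add[of N r "- s"] binf_uminus[of N s] by simp
lemma binf_sum: "(\<And>i. i \<in> A \<Longrightarrow> binf N (f i)) \<Longrightarrow> binf N (sum f A)"
  by (induct A rule: infinite_finite_induct) (auto intro: binf_add)

lemma Fract_eq_0: "b \<noteq> 0 \<Longrightarrow> Fract a b = 0 \<longleftrightarrow> a = 0"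
  by (simp add: Zero_fract_def eq_fract)

lemma add_dominant:
  fixes r s :: "'k::field rat"
  assumes "r \<noteq> 0" "binf (fdeg r - 1) s"
  shows "r + s \<noteq> 0 \<and> fdeg (r + s) = fdeg r"
proof (cases "s = 0")
  case True thus ?thesis using assms by simp
next
  case False
  obtain n d where 1: "r = Fract n d" "n \<noteq> 0" "d \<noteq> 0" using fract_rep_nz assms(1) by blast
  obtain n' d' where 2: "s = Fract n' d'" "n' \<noteq> 0" "d' \<noteq> 0" using fract_rep_nz False by blast
  have "fdeg s < fdeg r" using assms(2) False by (simp add: binf_def)
  hence "int (degree n') + int (degree d) < int (degree n) + int (degree d')" using 1 2 by (simp add: fdeg_Fract)
  hence lt: "degree (n' * d) < degree (n * d')" using 1 2 by (simp add: degree_mult_eq)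
  have dg: "degree (n * d' + n' * d) = degree (n * d')" using lt by (rule degree_add_eq_left)
  have nz: "n * d' + n' * d \<noteq> 0"
  proof
    assume "n * d' + n' * d = 0"
    hence "degree (n * d') = 0" using dg by simp
    thus False using lt by simp
  qed
  have sum: "r + s = Fract (n * d' + n' * d) (d * d')" using 1 2 by simp
  show ?thesis using sum nz 1 2 dg by (simp add: fdeg_Fract degree_mult_eq Fract_eq_0)
qed

lemma binf_fconst[simp]: "binf 0 (fconst c)" by (cases "c = 0") (auto simp: binf_def fdeg_fconst)
lemma binf_fx_powi: "n \<le> N \<Longrightarrow> binf N (fx powi n)" by (simp add: binf_def fdeg_fx_powi)

definition evi :: "'k::field poly \<Rightarrow> 'k rat" where "evi u = poly (map_poly fconst u) (inverse fx)"

lemma evi_pCons: "evi (pCons a p) = fconst a + inverse fx * evi p"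
  by (simp add: evi_def map_poly_pCons)
lemma evi_0[simp]: "evi 0 = 0" by (simp add: evi_def)
lemma evi_add: "evi (p + q) = evi p + evi q"
  by (induct p arbitrary: q; case_tac q) (auto simp: evi_pCons fconst_add algebra_simps)
lemma evi_const: "evi [:c:] = fconst c" by (simp add: evi_pCons)
lemma evi_1[simp]: "evi 1 = 1" unfolding one_pCons by (simp add: evi_const)
lemma evi_smult: "evi (smult c p) = fconst c * evi p"
  by (induct p) (auto simp: evi_pCons fconst_mult algebra_simps)
lemma evi_mult: "evi (p * q) = evi p * evi q"
  by (induct p) (auto simp: evi_pCons evi_add evi_smult algebra_simps)
lemma evi_x: "evi [:0,1:] = inverse fx" by (simp add: evi_pCons)
lemma evi_x_power: "evi ([:0,1:] ^ n) = inverse fx ^ n" by (induct n) (simp_all only: power_Suc power_0 evi_mult evi_x evi_1)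

lemma binf_evi: "binf 0 (evi u)"
proof (induct u)
  case 0 then show ?case by simp
next
  case (pCons a p)
  have "binf (-1 + 0) (inverse fx * evi p)"
    using binf_mult[OF binf_fx_powi[of "-1" "-1"] pCons(2)] by (simp add: power_int_minus)
  hence "binf 0 (inverse fx * evi p)" by (rule binf_mono) simp
  thus ?case by (simp add: evi_pCons binf_add)
qed

lemma evi_unit: assumes "poly u 0 \<noteq> 0" shows "evi u \<noteq> 0 \<and> fdeg (evi u) = 0"
proof -
  obtain a p where u: "u = pCons a p" by (cases u)
  have a: "a \<noteq> 0" using assms u by simp
  have "binf (-1 + 0) (inverse fx * evi p)"
    using binf_mult[OF binf_fx_powi[of "-1" "-1"] binf_evi] by (simp add: power_int_minus)
  hence "binf (fdeg (fconst a) - 1) (inverse fx * evi p)" using a by (simp add: fdeg_fconst)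
  from add_dominant[OF _ this] a show ?thesis by (simp add: u evi_pCons fdeg_fconst)
qed

lemma poly_map_fconst_fx: "poly (map_poly fconst p) fx = (to_fract p :: 'k::field rat)"
proof (induct p)
  case 0 then show ?case by simp
next
  case (pCons a p)
  have "pCons a p = [:a:] + [:0,1:] * p" by simp
  hence "to_fract (pCons a p) = fconst a + fx * to_fract p" by (simp only: to_fract_add to_fract_mult fconst_def' fx_def')
  thus ?case using pCons by (simp add: map_poly_pCons)
qed

lemma map_fconst_reflect: "map_poly fconst (reflect_poly p) = reflect_poly (map_poly (fconst :: 'k::field \<Rightarrow> 'k rat) p)"
proof -
  have dg: "degree (map_poly (fconst :: 'k \<Rightarrow> 'k rat) p) = degree p" by (rule degree_map_poly) simp
  show ?thesis by (rule poly_eqI) (simp add: coeff_map_poly coeff_reflect_poly dg)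
qed

lemma evi_reflect: "evi (reflect_poly p) = to_fract p / fx ^ degree (p::'k::field poly)"
proof -
  have dg: "degree (map_poly (fconst :: 'k \<Rightarrow> 'k rat) p) = degree p" by (rule degree_map_poly) simp
  have "evi (reflect_poly p) = inverse fx ^ degree p * poly (map_poly fconst p) (inverse (inverse fx))"
    unfolding evi_def map_fconst_reflect by (subst poly_reflect_poly_nz) (simp_all add: dg)
  thus ?thesis by (simp add: poly_map_fconst_fx field_simps power_inverse)
qed

lemma rep_inf:
  fixes r :: "'k::field rat"
  assumes "binf 0 r"
  shows "\<exists>a b. poly b 0 \<noteq> 0 \<and> r * evi b = evi a"
proof (cases "r = 0")
  case True thus ?thesis by (rule_tac x=0 in exI, rule_tac x=1 in exI) simp
next
  case False
  obtain n d where 1: "r = Fract n d" "n \<noteq> 0" "d \<noteq> 0" using fract_rep_nz False by blast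
  have le: "degree n \<le> degree d" using assms False 1 by (simp add: binf_def fdeg_Fract)
  define a where "a = [:0,1:] ^ (degree d - degree n) * reflect_poly n"
  have "evi a = inverse fx ^ (degree d - degree n) * (to_fract n / fx ^ degree n)"
    by (simp add: a_def evi_mult evi_x_power evi_reflect)
  also have "\<dots> = to_fract n / fx ^ degree d"
  proof -
    have "fx ^ degree d = fx ^ (degree d - degree n) * (fx ^ degree n :: 'k rat)" using le by (simp flip: power_add)
    thus ?thesis by (simp add: field_simps power_inverse)
  qed
  finally have ea: "evi a = to_fract n / fx ^ degree d" .
  have "r * evi (reflect_poly d) = evi a" using 1 ea by (simp add: evi_reflect Fract_conv_to_fract)
  moreover have "poly (reflect_poly d) 0 \<noteq> 0" using 1 by simp
  ultimately show ?thesis by blast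
qed


lemma polyK_pCons: "polyK (pCons a p) z = kconst a + kmul z (polyK p (z::'k::field fn))"
proof (cases "a = 0 \<and> p = 0")
  case True thus ?thesis by (cases z) (simp add: polyK_def kconst_def zero_prod_def)
next
  case False
  hence "coeffs (pCons a p) = a # coeffs p" by (auto simp: cCons_def)
  thus ?thesis by (simp add: polyK_def)
qed

lemma polyK_0: "polyK 0 z = 0" by (simp add: polyK_def)
lemma polyK_real: "polyK u (q, 0) = (poly (map_poly fconst u) q, 0::'k::field rat)"
  by (induct u) (simp_all add: polyK_pCons kconst_def map_poly_pCons zero_prod_def polyK_0)

lemma polyK_tInf: "polyK u (inverse fx, 0) = (evi u, 0::'k::field rat)"
  by (simp add: polyK_real evi_def)

lemma fderiv_evi: "fderiv (evi p) = - (inverse fx ^ 2 * evi (pderiv p) :: 'k::field rat)"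
proof (induct p)
  case 0 then show ?case by simp
next
  case (pCons a p)
  have di: "fderiv (inverse fx) = - (inverse fx ^ 2 :: 'k rat)"
    by (subst fderiv_inverse) (simp add: power2_eq_square field_simps)
  show ?case
    by (simp add: evi_pCons fderiv_add fderiv_mult di pCons pderiv_pCons evi_add algebra_simps power2_eq_square)
qed

lemma binf_deriv: assumes "binf 0 r" shows "binf (-2) (fderiv (r::'k::field rat))"
proof -
  obtain a b where ab: "poly b 0 \<noteq> 0" "r * evi b = evi a" using rep_inf[OF assms] by blast
  have eb: "evi b \<noteq> 0" "fdeg (evi b) = 0" using evi_unit[OF ab(1)] by auto
  have r: "r = evi a * inverse (evi b)" using ab eb by (simp add: field_simps)
  have "fderiv r = fderiv (evi a) * inverse (evi b) + evi a * (- fderiv (evi b) / (evi b * evi b))"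
    using r by (simp add: fderiv_mult fderiv_inverse)
  also have "\<dots> = inverse fx ^ 2 * ((evi a * evi (pderiv b) - evi (pderiv a) * evi b) * inverse (evi b) * inverse (evi b))"
    using eb by (simp add: fderiv_evi field_simps)
  finally have eq: "fderiv r = inverse fx ^ 2 * ((evi a * evi (pderiv b) - evi (pderiv a) * evi b) * inverse (evi b) * inverse (evi b))" .
  have ib: "binf 0 (inverse (evi b))" using eb by (simp add: binf_def fdeg_inverse)
  have "binf 0 (evi a * evi (pderiv b) - evi (pderiv a) * evi b)"
    using binf_mult[OF binf_evi binf_evi, of a "pderiv b"] binf_mult[OF binf_evi binf_evi, of "pderiv a" b]
    by (simp add: binf_diff)
  hence "binf 0 ((evi a * evi (pderiv b) - evi (pderiv a) * evi b) * inverse (evi b) * inverse (evi b))"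
    using binf_mult[OF binf_mult[OF _ ib] ib] by simp
  moreover have "binf (-2) (inverse fx ^ 2 :: 'k rat)"
    using binf_fx_powi[of "-2" "-2"] by (simp add: power_int_minus power_inverse)
  ultimately show ?thesis using eq binf_mult by fastforce
qed

context cv begin

definition SS :: "'k rat" where "SS = fx powi (- int (gg + 1))"

lemma SS_inv: "SS = inverse (fx ^ (gg + 1))" unfolding SS_def by (simp only: power_int_minus power_int_of_nat)
lemma SS_nz: "SS \<noteq> 0" by (simp add: SS_inv)
lemma SS_mult: "SS * fx ^ (gg + 1) = 1" unfolding SS_inv by (rule left_inverse) simp
lemma fdeg_SS: "fdeg SS = - int (gg + 1)" by (simp add: SS_def fdeg_fx_powi)

lemma sInf_SS: "sInf = (0, SS)" by (simp add: sInf_eq SS_def)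

lemma embB_eq: "embB u = (evi (fst u), evi (snd u) * SS)"
  by (simp add: embB_def tInf_eq polyK_tInf sInf_SS)

lemma fdeg_fF: "fdeg (fF::'k rat) = int pp"
  using Fp_nz by (simp add: fF_eq fdeg_to_fract degree_Fp)

lemma binf_T: "binf (-1) (SS * SS * fF)"
proof -
  have "fdeg (SS * SS * fF) = -1" using SS_nz fF_nz by (simp add: fdeg_mult fdeg_SS fdeg_fF pp_eq)
  thus ?thesis by (simp add: binf_def)
qed

lemma dom_contra:
  assumes "X \<noteq> 0" "fdeg X > 0" "binf (fdeg X - 1) Y" "binf 0 (X + Y)"
  shows False
  using add_dominant[OF assms(1,3)] assms(2,4) by (simp add: binf_def)

lemma inf_char: fixes r1 r2 :: "'k rat" shows "reg_at Inf (r1, r2) \<longleftrightarrow> binf 0 r1 \<and> binf 0 (r2 * fx ^ (gg + 1))"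
proof
  assume "reg_at Inf (r1, r2)"
  then obtain u v where uv: "poly (fst v) 0 \<noteq> 0" "kmul (r1, r2) (embB v) = embB u" by auto
  define \<rho> where "\<rho> = r2 * fx ^ (gg + 1)"
  have r2: "r2 = \<rho> * SS" unfolding \<rho>_def by (metis SS_mult mult.assoc mult.commute mult_1_right)
  define V0 V1 U0 U1 where "V0 = evi (fst v)" and "V1 = evi (snd v)" and "U0 = evi (fst u)" and "U1 = evi (snd u)"
  define T where "T = SS * SS * fF"
  have E: "r1 * V0 + r2 * (V1 * SS) * fF = U0" "r1 * (V1 * SS) + r2 * V0 = U1 * SS"
    using uv(2) by (simp_all add: embB_eq V0_def V1_def U0_def U1_def)
  have E1: "r1 * V0 + \<rho> * V1 * T = U0" using E(1) r2 by (simp add: T_def algebra_simps)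
  have "(r1 * V1 + \<rho> * V0) * SS = U1 * SS" using E(2) r2 by (simp add: algebra_simps)
  hence E2: "r1 * V1 + \<rho> * V0 = U1" using SS_nz by simp
  have V0: "V0 \<noteq> 0" "fdeg V0 = 0" using evi_unit[OF uv(1)] V0_def by auto
  have bV1: "binf 0 V1" and bU0: "binf 0 U0" and bU1: "binf 0 U1" by (simp_all add: V0_def V1_def U0_def U1_def binf_evi)
  have bT: "binf (-1) T" using binf_T T_def by simp
  have caseA: False if "r1 \<noteq> 0" "fdeg r1 > 0" "binf (fdeg r1) \<rho>"
  proof -
    have "binf (fdeg r1 + 0 + -1) (\<rho> * V1 * T)" using binf_mult[OF binf_mult[OF that(3) bV1] bT] .
    hence "binf (fdeg (r1 * V0) - 1) (\<rho> * V1 * T)" using V0 that by (simp add: fdeg_mult)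
    moreover have "r1 * V0 \<noteq> 0" "fdeg (r1 * V0) > 0" using V0 that by (simp_all add: fdeg_mult)
    ultimately show False using dom_contra E1 bU0 by metis
  qed
  have caseB: False if "\<rho> \<noteq> 0" "fdeg \<rho> > 0" "binf (fdeg \<rho> - 1) r1"
  proof -
    have "binf (fdeg \<rho> - 1 + 0) (r1 * V1)" using binf_mult[OF that(3) bV1] .
    hence "binf (fdeg (\<rho> * V0) - 1) (r1 * V1)" using V0 that by (simp add: fdeg_mult)
    moreover have "\<rho> * V0 \<noteq> 0" "fdeg (\<rho> * V0) > 0" using V0 that by (simp_all add: fdeg_mult)
    ultimately show False using dom_contra E2 bU1 by (metis add.commute)
  qed
  show "binf 0 r1 \<and> binf 0 (r2 * fx ^ (gg + 1))"
  proof (rule ccontr)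
    assume "\<not> (binf 0 r1 \<and> binf 0 (r2 * fx ^ (gg + 1)))"
    hence nb: "\<not> binf 0 r1 \<or> \<not> binf 0 \<rho>" by (simp add: \<rho>_def)
    show False
    proof (cases "r1 \<noteq> 0 \<and> fdeg r1 > 0 \<and> binf (fdeg r1) \<rho>")
      case True thus False using caseA by blast
    next
      case False
      hence "\<rho> \<noteq> 0 \<and> fdeg \<rho> > 0 \<and> binf (fdeg \<rho> - 1) r1" using nb by (auto simp: binf_def)
      thus False using caseB by blast
    qed
  qed
next
  assume "binf 0 r1 \<and> binf 0 (r2 * fx ^ (gg + 1))"
  then obtain a1 b1 a2 b2 where 1: "poly b1 0 \<noteq> 0" "r1 * evi b1 = evi a1"
    and 2: "poly b2 0 \<noteq> 0" "(r2 * fx ^ (gg + 1)) * evi b2 = evi a2"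
    using rep_inf by metis
  have r2: "r2 = (r2 * fx ^ (gg + 1)) * SS" by (metis SS_mult mult.assoc mult.commute mult_1_right)
  have "poly (fst (b1 * b2, 0::'k poly)) 0 \<noteq> 0" using 1 2 by simp
  moreover have "kmul (r1, r2) (embB (b1 * b2, 0)) = embB (a1 * b2, a2 * b1)"
  proof -
    have "r2 * (evi b1 * evi b2) = evi a2 * evi b1 * SS"
      by (subst r2) (simp add: 2(2)[symmetric] algebra_simps)
    thus ?thesis using 1 by (simp add: embB_eq evi_mult algebra_simps)
  qed
  ultimately show "reg_at Inf (r1, r2)" by (simp only: reg_at.simps) blast
qed

end

declare reg_at.simps[simp del] dreg_at.simps[simp del]

context cv begin

lemma rho_SS: "r2 = (r2 * fx ^ (gg + 1)) * SS"
  by (metis SS_mult mult.assoc mult.commute mult_1_right)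

lemma reg_inf_add: "reg_at Inf (h::'k fn) \<Longrightarrow> reg_at Inf h' \<Longrightarrow> reg_at Inf (h + h')"
  by (cases h; cases h') (simp add: inf_char binf_add distrib_right)

lemma reg_inf_uminus: "reg_at Inf (h::'k fn) \<Longrightarrow> reg_at Inf (- h)"
  by (cases h) (simp add: inf_char binf_uminus)

lemma reg_inf_diff: "reg_at Inf (h::'k fn) \<Longrightarrow> reg_at Inf h' \<Longrightarrow> reg_at Inf (h - h')"
  using reg_inf_add[of h "- h'"] reg_inf_uminus[of h'] by simp

lemma reg_inf_mult: assumes "reg_at Inf (h::'k fn)" "reg_at Inf h'" shows "reg_at Inf (kmul h h')"
proof -
  obtain r1 r2 q1 q2 where h: "h = (r1, r2)" "h' = (q1, q2)" by (cases h; cases h')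
  define \<rho> \<sigma> where "\<rho> = r2 * fx ^ (gg + 1)" and "\<sigma> = q2 * fx ^ (gg + 1)"
  have b: "binf 0 r1" "binf 0 \<rho>" "binf 0 q1" "binf 0 \<sigma>" using assms h by (simp_all add: inf_char \<rho>_def \<sigma>_def)
  have r2: "r2 = \<rho> * SS" and q2: "q2 = \<sigma> * SS" using rho_SS \<rho>_def \<sigma>_def by blast+
  have e1: "r1 * q1 + r2 * q2 * fF = r1 * q1 + \<rho> * \<sigma> * (SS * SS * fF)" using r2 q2 by (simp add: algebra_simps)
  have b1: "binf 0 (r1 * q1 + \<rho> * \<sigma> * (SS * SS * fF))"
    using binf_add[OF binf_mult[OF b(1,3)] binf_mono[OF binf_mult[OF binf_mult[OF b(2,4)] binf_T]]] by simp
  have e2: "(r1 * q2 + r2 * q1) * fx ^ (gg + 1) = r1 * \<sigma> + \<rho> * q1"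
    by (simp add: \<rho>_def \<sigma>_def algebra_simps)
  have b2: "binf 0 (r1 * \<sigma> + \<rho> * q1)"
    using binf_add[OF binf_mult[OF b(1,4)] binf_mult[OF b(2,3)]] by simp
  have "binf 0 (r1 * q1 + r2 * q2 * fF)" unfolding e1 by (rule b1)
  moreover have "binf 0 ((r1 * q2 + r2 * q1) * fx ^ (gg + 1))" unfolding e2 by (rule b2)
  ultimately show ?thesis using h by (simp add: inf_char)
qed

lemma reg_inf_const: "reg_at Inf (fconst (c::'k), 0)" by (simp add: inf_char)
lemma reg_inf_ksmul: "reg_at Inf (h::'k fn) \<Longrightarrow> reg_at Inf (ksmul c h)"
  using reg_inf_mult[OF reg_inf_const] by (simp add: ksmul_kmul)

lemma reg_aff_const: "reg_at (Aff a b) (fconst (c::'k), 0)" by (rule reg_aff_nopole) simp_all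
lemma reg_aff_ksmul: "onc a b \<Longrightarrow> reg_at (Aff a b) h \<Longrightarrow> reg_at (Aff a b) (ksmul c h)"
  using reg_aff_mult[OF _ reg_aff_const] by (simp add: ksmul_kmul)

lemma reg_sum:
  assumes "\<And>h h'. reg_at P h \<Longrightarrow> reg_at P h' \<Longrightarrow> reg_at P (h + h')" "reg_at P 0"
  shows "(\<And>i. i \<in> A \<Longrightarrow> reg_at P (f i)) \<Longrightarrow> reg_at P (sum f A)"
  by (induct A rule: infinite_finite_induct) (auto intro: assms)

lemma reg_inf_0: "reg_at Inf (0::'k fn)" using reg_inf_const[of 0] by (simp add: zero_prod_def)
lemma reg_aff_0: "reg_at (Aff (a::'k) b) 0" using reg_aff_const[of a b 0] by (simp add: zero_prod_def)

lemma dreg_inf_add: "dreg_at Inf (w::'k fn) \<Longrightarrow> dreg_at Inf w' \<Longrightarrow> dreg_at Inf (w + w')"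
proof -
  assume "dreg_at Inf w" "dreg_at Inf w'"
  then obtain a b a' b' where 1: "reg_at Inf a" "reg_at Inf b" "w = kmul a (kd tInf) + kmul b (kd sInf)"
    and 2: "reg_at Inf a'" "reg_at Inf b'" "w' = kmul a' (kd tInf) + kmul b' (kd sInf)"
    by (simp only: dreg_at.simps) blast
  have "w + w' = kmul (a + a') (kd tInf) + kmul (b + b') (kd sInf)" using 1 2 by (simp add: kmul_add_left)
  thus ?thesis using 1 2 reg_inf_add by (simp only: dreg_at.simps) blast
qed

lemma dreg_inf_mult: "reg_at Inf (h::'k fn) \<Longrightarrow> dreg_at Inf (w::'k fn) \<Longrightarrow> dreg_at Inf (kmul h w)"
proof -
  assume h: "reg_at Inf h" and "dreg_at Inf w"
  then obtain a b where 1: "reg_at Inf a" "reg_at Inf b" "w = kmul a (kd tInf) + kmul b (kd sInf)"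
    by (simp only: dreg_at.simps) blast
  have "kmul h w = kmul (kmul h a) (kd tInf) + kmul (kmul h b) (kd sInf)" using 1 by (simp add: kmul_add_right kmul_assoc)
  thus ?thesis using 1 h reg_inf_mult by (simp only: dreg_at.simps) blast
qed

lemma dreg_aff_add: "onc a b \<Longrightarrow> dreg_at (Aff a b) w \<Longrightarrow> dreg_at (Aff a b) w' \<Longrightarrow> dreg_at (Aff a b) (w + w')"
proof -
  assume o: "onc a b" and "dreg_at (Aff a b) w" "dreg_at (Aff a b) w'"
  then obtain p q p' q' where 1: "reg_at (Aff a b) p" "reg_at (Aff a b) q" "w = kmul p (kd kX) + kmul q (kd kY)"
    and 2: "reg_at (Aff a b) p'" "reg_at (Aff a b) q'" "w' = kmul p' (kd kX) + kmul q' (kd kY)"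
    by (simp only: dreg_at.simps) blast
  have "w + w' = kmul (p + p') (kd kX) + kmul (q + q') (kd kY)" using 1 2 by (simp add: kmul_add_left)
  thus ?thesis using 1 2 o reg_aff_add by (simp only: dreg_at.simps) blast
qed

lemma dreg_aff_mult: "onc a b \<Longrightarrow> reg_at (Aff a b) h \<Longrightarrow> dreg_at (Aff a b) w \<Longrightarrow> dreg_at (Aff a b) (kmul h w)"
proof -
  assume o: "onc a b" and h: "reg_at (Aff a b) h" and "dreg_at (Aff a b) w"
  then obtain p q where 1: "reg_at (Aff a b) p" "reg_at (Aff a b) q" "w = kmul p (kd kX) + kmul q (kd kY)"
    by (simp only: dreg_at.simps) blast
  have "kmul h w = kmul (kmul h p) (kd kX) + kmul (kmul h q) (kd kY)" using 1 by (simp add: kmul_add_right kmul_assoc)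
  thus ?thesis using 1 h o reg_aff_mult by (simp only: dreg_at.simps) blast
qed

lemma neg_as_mult: "- w = kmul (fconst (-1), 0) (w::'k fn)"
  by (cases w) (simp add: fconst_uminus)

lemma dreg_inf_diff: "dreg_at Inf (w::'k fn) \<Longrightarrow> dreg_at Inf w' \<Longrightarrow> dreg_at Inf (w - w')"
proof -
  assume 1: "dreg_at Inf w" and 2: "dreg_at Inf w'"
  have "dreg_at Inf (kmul (fconst (-1), 0) w')" by (rule dreg_inf_mult[OF reg_inf_const 2])
  hence "dreg_at Inf (- w')" by (simp only: neg_as_mult[symmetric])
  hence "dreg_at Inf (w + - w')" by (rule dreg_inf_add[OF 1])
  thus ?thesis by simp
qed
lemma dreg_aff_diff: "onc a b \<Longrightarrow> dreg_at (Aff a b) w \<Longrightarrow> dreg_at (Aff a b) w' \<Longrightarrow> dreg_at (Aff a b) (w - w')"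
proof -
  assume o: "onc a b" and 1: "dreg_at (Aff a b) w" and 2: "dreg_at (Aff a b) w'"
  have "dreg_at (Aff a b) (kmul (fconst (-1), 0) w')" by (rule dreg_aff_mult[OF o reg_aff_const 2])
  hence "dreg_at (Aff a b) (- w')" by (simp only: neg_as_mult[symmetric])
  hence "dreg_at (Aff a b) (w + - w')" by (rule dreg_aff_add[OF o 1])
  thus ?thesis by simp
qed
lemma dreg_inf_ksmul: "dreg_at Inf (w::'k fn) \<Longrightarrow> dreg_at Inf (ksmul c w)"
  unfolding ksmul_kmul by (rule dreg_inf_mult[OF reg_inf_const])
lemma dreg_aff_ksmul: "onc a b \<Longrightarrow> dreg_at (Aff a b) w \<Longrightarrow> dreg_at (Aff a b) (ksmul c w)"
  unfolding ksmul_kmul by (rule dreg_aff_mult[OF _ reg_aff_const])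
lemma dreg_inf_0: "dreg_at Inf (0::'k fn)"
  by (simp only: dreg_at.simps) (rule exI[of _ 0], rule exI[of _ 0], simp add: reg_inf_0)
lemma dreg_aff_0: "dreg_at (Aff (a::'k) b) 0"
  by (simp only: dreg_at.simps) (rule exI[of _ 0], rule exI[of _ 0], simp add: reg_aff_0)

lemma dreg_inf_sum: "(\<And>i. i \<in> A \<Longrightarrow> dreg_at Inf (f i)) \<Longrightarrow> dreg_at Inf (sum f A::'k fn)"
  by (induct A rule: infinite_finite_induct) (auto intro: dreg_inf_add dreg_inf_0)
lemma dreg_aff_sum: "onc a b \<Longrightarrow> (\<And>i. i \<in> A \<Longrightarrow> dreg_at (Aff a b) (f i)) \<Longrightarrow> dreg_at (Aff a b) (sum f A)"
  by (induct A rule: infinite_finite_induct) (auto intro: dreg_aff_add dreg_aff_0)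

lemma kd_tInf: "kd tInf = (- (inverse fx ^ 2), 0::'k rat)"
proof -
  have "fderiv (inverse fx) = - (inverse fx ^ 2 :: 'k rat)"
    by (subst fderiv_inverse) (simp add: power2_eq_square field_simps)
  thus ?thesis by (simp add: tInf_eq kd_simp)
qed

definition DD :: "'k rat" where "DD = - (fx ^ (gg - 1) / (2 * fF))"

lemma kd_sInf: "kd sInf = (0, DD)"
proof -
  have g1: "gg \<ge> 1" by (rule gg_pos)
  have dS: "fderiv SS = - (of_nat (gg + 1) * inverse (fx ^ (gg + 2)))"
  proof -
    have "fderiv SS = of_int (- int (gg + 1)) * fx powi (- int (gg + 1) - 1)"
      unfolding SS_def by (simp add: fderiv_power_int)
    moreover have "fx powi (- int (gg + 1) - 1) = inverse (fx ^ (gg + 2) :: 'k rat)"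
    proof -
      have "- int (gg + 1) - 1 = - int (gg + 2)" by simp
      thus ?thesis by (simp only: power_int_minus power_int_of_nat)
    qed
    ultimately show ?thesis by (simp add: algebra_simps)
  qed
  have key: "of_nat (2 * (gg + 1)) * fF + fx = (fx ^ (2 * gg + 1) :: 'k rat)" using key_identity pp_eq by simp
  have "fderiv SS + SS * fderiv fF / (2 * fF) = DD"
  proof -
    have "2 * gg + 1 = (gg - 1) + (gg + 2)" using g1 by simp
    hence e2: "fx ^ (2 * gg + 1) = fx ^ (gg - 1) * (fx ^ (gg + 2) :: 'k rat)" by (metis power_add)
    have nz: "fx ^ (gg - 1) \<noteq> (0::'k rat)" "fx ^ (gg + 2) \<noteq> (0::'k rat)" "fx ^ (gg + 1) \<noteq> (0::'k rat)" by simp_all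
    have "fderiv SS + SS * fderiv fF / (2 * fF) = - (of_nat (gg + 1) * inverse (fx ^ (gg + 2))) - inverse (fx ^ (gg + 1)) / (2 * fF)"
      by (simp only: dS fderiv_fF) (simp add: SS_inv)
    also have "\<dots> = - ((of_nat (2 * (gg + 1)) * fF + fx) / (2 * fF * fx ^ (gg + 2)))"
      using fF_nz two_nz_rat nz by (simp add: field_simps)
    also have "\<dots> = - (fx ^ (2 * gg + 1) / (2 * fF * fx ^ (gg + 2)))" by (simp only: key)
    also have "\<dots> = DD" unfolding DD_def using fF_nz two_nz_rat nz e2 by (simp add: field_simps)
    finally show ?thesis .
  qed
  thus ?thesis by (simp add: sInf_SS kd_simp)
qed

lemma DD_SS: "2 * SS * DD * fF = - (inverse fx ^ 2 :: 'k rat)"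
proof -
  have g1: "gg \<ge> 1" by (rule gg_pos)
  have "fx ^ (gg + 1) = fx ^ (gg - 1) * (fx ^ 2 :: 'k rat)" using g1 by (simp flip: power_add)
  thus ?thesis using fF_nz two_nz_rat by (simp add: SS_inv DD_def field_simps)
qed

lemma dt_ds: "kd tInf = kmul (0, 2 * SS) (kd sInf)"
  by (simp add: kd_tInf kd_sInf DD_SS[symmetric] algebra_simps)

lemma reg_inf_sInf: "reg_at Inf (0, fconst c * SS::'k rat)"
proof -
  have e: "fconst c * SS * fx ^ (gg + 1) = fconst c" using SS_mult by (metis mult.assoc mult_1_right)
  have "binf 0 (fconst c * SS * fx ^ (gg + 1))" unfolding e by simp
  thus ?thesis by (simp add: inf_char)
qed

lemma two_fconst: "(2::'k rat) = fconst 2" using fconst_of_nat[of 2, where 'k='k] by simp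

lemma dreg_inf_form: "dreg_at Inf (w::'k fn) \<Longrightarrow> \<exists>\<gamma>. reg_at Inf \<gamma> \<and> w = kmul \<gamma> (kd sInf)"
proof -
  assume "dreg_at Inf w"
  then obtain \<alpha> \<beta> where ab: "reg_at Inf \<alpha>" "reg_at Inf \<beta>" "w = kmul \<alpha> (kd tInf) + kmul \<beta> (kd sInf)" by (auto simp: dreg_at.simps)
  have "w = kmul (kmul \<alpha> (0, 2 * SS) + \<beta>) (kd sInf)"
    using ab(3) by (simp add: dt_ds kmul_add_left kmul_assoc)
  moreover have "reg_at Inf (kmul \<alpha> (0, 2 * SS) + \<beta>)"
    using ab reg_inf_add reg_inf_mult reg_inf_sInf[of 2] two_fconst by metis
  ultimately show ?thesis by blast
qed

lemma dreg_inf_kd: assumes "reg_at Inf (f::'k fn)" shows "dreg_at Inf (kd f)"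
proof -
  obtain r1 r2 where f: "f = (r1, r2)" by (cases f)
  define \<rho> where "\<rho> = r2 * fx ^ (gg + 1)"
  have b: "binf 0 r1" "binf 0 \<rho>" using assms f by (simp_all add: inf_char \<rho>_def)
  have r2: "r2 = \<rho> * SS" using rho_SS \<rho>_def by blast
  define \<alpha> where "\<alpha> = (- (fx ^ 2 * fderiv r1), - (fx ^ 2 * fderiv \<rho>) * SS)"
  define \<beta> where "\<beta> = (\<rho>, 0::'k rat)"
  have bx: "binf 2 (fx ^ 2 :: 'k rat)" using binf_fx_powi[of 2 2] by simp
  have "reg_at Inf \<alpha>"
  proof -
    have "binf (2 + -2) (fx ^ 2 * fderiv r1)" using binf_mult[OF bx binf_deriv[OF b(1)]] .
    moreover have "binf (2 + -2) (fx ^ 2 * fderiv \<rho>)" using binf_mult[OF bx binf_deriv[OF b(2)]] .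
    moreover have e: "- (fx ^ 2 * fderiv \<rho>) * SS * fx ^ (gg + 1) = - (fx ^ 2 * fderiv \<rho>)"
      using SS_mult by (metis mult.assoc mult_1_right)
    ultimately have "binf 0 (- (fx ^ 2 * fderiv r1))" "binf 0 (- (fx ^ 2 * fderiv \<rho>) * SS * fx ^ (gg + 1))"
      unfolding e by (simp_all add: binf_uminus)
    thus ?thesis unfolding \<alpha>_def inf_char by blast
  qed
  moreover have "reg_at Inf \<beta>" using b by (simp add: \<beta>_def inf_char)
  moreover have "kd f = kmul \<alpha> (kd tInf) + kmul \<beta> (kd sInf)"
  proof -
    have "kd sInf = (0, fderiv SS + SS * fderiv fF / (2 * fF))" by (simp add: sInf_SS kd_simp)
    thus ?thesis using r2 by (simp add: f kd_simp \<alpha>_def \<beta>_def kd_tInf fderiv_mult power2_eq_square field_simps)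
  qed
  ultimately show ?thesis unfolding dreg_at.simps by blast
qed

lemma dreg_aff_kd_poly: "dreg_at (Aff a b) (kd (to_fract A, to_fract B))"
proof -
  have "kd (to_fract A, to_fract B) = kmul (to_fract (pderiv A), to_fract (pderiv B)) (kd kX) + kmul (to_fract B, 0) (kd kY)"
    by (simp add: kd_simp kd_kX kd_kY)
  moreover have "reg_at (Aff a b) (to_fract (pderiv A), to_fract (pderiv B))" by (rule reg_aff_nopole) simp_all
  moreover have "reg_at (Aff a b) (to_fract B, 0)" by (rule reg_aff_nopole) simp_all
  ultimately show ?thesis by (auto simp: dreg_at.simps)
qed

lemma dreg_aff_H: assumes "onc a b" "dreg_at (Aff a b) w" shows "reg_at (Aff a b) (kmul w kY)"
proof -
  obtain \<alpha> \<beta> where ab: "reg_at (Aff a b) \<alpha>" "reg_at (Aff a b) \<beta>" "w = kmul \<alpha> (kd kX) + kmul \<beta> (kd kY)"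
    using assms(2) by (auto simp: dreg_at.simps)
  have "kmul w kY = kmul \<alpha> kY + kmul \<beta> (fconst (- inverse (2::'k)), 0)"
  proof -
    have "fconst 2 * fconst (inverse (2::'k)) = 1" using two_nz by (simp flip: fconst_mult)
    hence "inverse (fconst 2) = fconst (inverse (2::'k))" by (rule inverse_unique)
    hence i2: "fconst (- inverse 2) = - inverse (2::'k rat)" using two_fconst by (simp add: fconst_uminus)
    have 1: "kmul (kd kX) kY = kY" by (simp add: kd_kX kY_simp)
    have "kmul (kd kY) kY = (- 1 / (2 * fF) * fF, 0::'k rat)" by (simp only: kd_kY') (simp add: kY_simp)
    also have "\<dots> = (fconst (- inverse 2), 0)" using i2 fF_nz by (simp add: field_simps)
    finally have 2: "kmul (kd kY) kY = (fconst (- inverse (2::'k)), 0)" .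
    show ?thesis by (simp only: ab(3) kmul_add_left kmul_assoc 1 2)
  qed
  moreover have "reg_at (Aff a b) kY" unfolding kY_simp by (rule reg_aff_nopole) simp_all
  ultimately show ?thesis using ab assms(1) reg_aff_add reg_aff_mult reg_aff_const by metis
qed

end

lemma nopole_fderiv: "nopole a r \<Longrightarrow> nopole a (fderiv r)"
proof -
  assume "nopole a r"
  then obtain n d where 1: "r = Fract n d" "poly d a \<noteq> 0" unfolding nopole_def by blast
  hence "d \<noteq> 0" by auto
  hence "fderiv r = Fract (pderiv n * d - n * pderiv d) (d * d)" using 1 by (simp add: fderiv_Fract)
  thus ?thesis using 1 unfolding nopole_def by fastforce
qed

lemma kmul_real_real: "kmul (c, 0) (kmul (d, 0) w) = kmul (c * d, 0) (w::'k::field fn)"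
  by (cases w) (simp add: algebra_simps)

lemma powi_neg_nat: "x powi (- int n) = inverse x ^ n" for x :: "'a::field"
  by (simp add: power_int_minus power_inverse)

lemma binf_inv_pow: "binf 0 (inverse fx ^ n :: 'k::field rat)"
  using binf_fx_powi[of "- int n" 0] by (simp add: powi_neg_nat)

context cv begin

lemma dreg_aff_kd: assumes "nopole a r1" "nopole a r2" shows "dreg_at (Aff a b) (kd (r1, r2))"
proof -
  have "kd (r1, r2) = kmul (fderiv r1, fderiv r2) (kd kX) + kmul (r2, 0) (kd kY)"
    by (simp add: kd_simp kd_kX kd_kY)
  moreover have "reg_at (Aff a b) (fderiv r1, fderiv r2)" using assms by (intro reg_aff_nopole nopole_fderiv)
  moreover have "reg_at (Aff a b) (r2, 0)" using assms by (intro reg_aff_nopole) simp_all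
  ultimately show ?thesis unfolding dreg_at.simps by blast
qed

lemma U1_cases: "Q \<in> U1 \<Longrightarrow> Q = Inf \<or> (\<exists>a b. Q = Aff a b \<and> onc a b \<and> a \<noteq> (0::'k))"
proof -
  assume "Q \<in> U1"
  hence Q: "Q \<in> Xpts" "Q \<noteq> Aff 0 0" by (auto simp: U1_def)
  show ?thesis
  proof (cases Q)
    case (Aff a b)
    hence o: "onc a b" using Q Aff_in_Xpts by simp
    have "a \<noteq> 0"
    proof
      assume "a = 0"
      hence "b ^ 2 = 0" using o char_gt2 by (simp add: onc_def)
      thus False using Q Aff \<open>a = 0\<close> by simp
    qed
    thus ?thesis using Aff o by blast
  qed simp
qed

lemma U2_cases: "Q \<in> U2 \<Longrightarrow> \<exists>a b. Q = Aff a b \<and> onc a (b::'k)"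
proof -
  assume "Q \<in> U2"
  hence Q: "Q \<in> Xpts" "Q \<noteq> Inf" by (auto simp: U2_def)
  thus ?thesis by (cases Q) (auto simp: Aff_in_Xpts)
qed

lemma U12_cases: "Q \<in> U1 \<inter> U2 \<Longrightarrow> \<exists>a b. Q = Aff a b \<and> onc a b \<and> a \<noteq> (0::'k)"
  using U1_cases U2_cases by (metis IntD1 IntD2 pt.distinct(1))

lemma Inf_U1: "(Inf::'k pt) \<in> U1" by (simp add: U1_def Xpts_def)
lemma Aff_U1: "onc a b \<Longrightarrow> a \<noteq> 0 \<Longrightarrow> Aff a b \<in> (U1::'k pt set)" by (simp add: U1_def Aff_in_Xpts)
lemma Aff_U2: "onc a b \<Longrightarrow> Aff a b \<in> (U2::'k pt set)" by (simp add: U2_def Aff_in_Xpts)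

definition tw :: "nat \<Rightarrow> 'k fn" where "tw i = (0, fx ^ i * inverse fF)"

lemma tau_eq: "tau K i = (tw i, tw i, 0)"
  by (simp add: tau_def tw_def kX_def kpow_real kinv_kY Let_def)

definition eta1 :: "nat \<Rightarrow> 'k fn" where
  "eta1 i = kmul (fconst (of_int (1 - 2 * int i)) * inverse fx ^ (gg + i - 1), 0) (kd sInf)"
definition eta2 :: "nat \<Rightarrow> 'k fn" where
  "eta2 i = kmul (fconst (of_int (- 2 * int i)) * fx ^ (2 * gg - i), 0) (kd kY)"
definition eta3 :: "nat \<Rightarrow> 'k fn" where
  "eta3 i = (0, inverse fx ^ i)"

lemma eta_eq: assumes "1 \<le> i" "i \<le> gg" shows "eta K i = (eta1 i, eta2 i, eta3 i)"
proof -
  have e1: "fx powi (1 - int gg - int i) = (inverse fx ^ (gg + i - 1) :: 'k rat)"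
  proof -
    have "1 - int gg - int i = - int (gg + i - 1)" using assms by simp
    thus ?thesis by (simp only: powi_neg_nat)
  qed
  have e2: "fx powi (2 * int gg - int i) = (fx ^ (2 * gg - i) :: 'k rat)"
  proof -
    have "2 * int gg - int i = int (2 * gg - i)" using assms by simp
    thus ?thesis by (simp only: power_int_of_nat)
  qed
  have e3: "fx powi (- int i) = (inverse fx ^ i :: 'k rat)" by (rule powi_neg_nat)
  have e4: "kmul kY (kpowi kX (- int gg - 1)) = (sInf :: 'k fn)"
  proof -
    have h: "- int gg - 1 = - 1 - int gg" by simp
    show ?thesis by (simp only: h) (simp add: kpowi_kX kY_simp sInf_SS SS_def)
  qed
  show ?thesis
    unfolding eta_def Let_def genus_eq e4
    by (simp add: kpowi_kX kconst_simp e1 e2 e3 eta1_def eta2_def eta3_def kY_simp kmul_real_real del: kmul_simp) simp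
qed

end

lemma inv_pow_cancel: "inverse fx ^ n * fx ^ n = (1 :: 'k::field rat)"
  by (simp add: power_inverse)

context cv begin

lemma DD_alt: "DD = - (fx ^ (gg - 1) / (2 * fF))" by (simp add: DD_def)

lemma eta_cocycle: assumes "1 \<le> i" "i \<le> gg" shows "kd (eta3 i) = eta1 i - eta2 i"
proof -
  define x :: "'k rat" where "x = fx"
  have xnz: "x \<noteq> 0" by (simp add: x_def)
  have Fnz: "fF \<noteq> (0::'k rat)" by (rule fF_nz)
  have tnz: "(2::'k rat) \<noteq> 0" by (rule two_nz_rat)
  have dinv: "fderiv (inverse fx) = - (inverse fx ^ 2 :: 'k rat)"
    by (subst fderiv_inverse) (simp add: power2_eq_square field_simps)
  have lhs: "snd (kd (eta3 i)) = - (of_nat i * inverse x ^ (i - 1) * inverse x ^ 2) - inverse x ^ i / (2 * fF)"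
    by (simp add: eta3_def kd_simp fderiv_power dinv fderiv_fF x_def)
  have c1: "fconst (of_int (1 - 2 * int i)) = (1 - 2 * of_nat i :: 'k rat)"
    by (simp only: fconst_of_int) simp
  have c2: "fconst (of_int (- 2 * int i)) = (- 2 * of_nat i :: 'k rat)"
    by (simp only: fconst_of_int) simp
  have c1': "fconst (1 - 2 * of_nat i :: 'k) = (1 - 2 * of_nat i :: 'k rat)" using c1 by simp
  have c2': "fconst (- (2 * of_nat i) :: 'k) = (- (2 * of_nat i) :: 'k rat)" using c2 by simp
  have r1: "snd (eta1 i) = - ((1 - 2 * of_nat i) * inverse x ^ (gg + i - 1) * (x ^ (gg - 1) / (2 * fF)))"
    by (simp add: eta1_def kd_sInf DD_def c1' x_def)
  have r2: "snd (eta2 i) = (- 2 * of_nat i) * x ^ (2 * gg - i) * (- 1 / (2 * fF))"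
    by (simp only: eta2_def kd_kY' c2 kmul_simp snd_conv x_def) simp
  have fst: "fst (kd (eta3 i)) = fst (eta1 i - eta2 i)"
    by (simp add: eta3_def eta1_def eta2_def kd_simp kd_sInf kd_kY')
  have A: "inverse x ^ (gg + i - 1) * x ^ (gg - 1) = inverse x ^ i"
  proof -
    have "gg + i - 1 = (gg - 1) + i" using assms by simp
    hence "inverse x ^ (gg + i - 1) = inverse x ^ (gg - 1) * inverse x ^ i" by (simp add: power_add)
    thus ?thesis using inv_pow_cancel[of "gg - 1"] by (simp add: x_def algebra_simps)
  qed
  have B: "x ^ pp = x ^ (2 * gg - i) * x ^ i * x"
  proof -
    have "pp = (2 * gg - i) + i + 1" using assms pp_eq by simp
    thus ?thesis by (simp add: power_add)
  qed
  have Fdef: "fF = x ^ pp - x" by (simp add: fF_def x_def pp_def)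
  have I1: "inverse x ^ (i - 1) * inverse x ^ 2 = inverse x ^ i * inverse x"
  proof -
    have "i - 1 + 2 = i + 1" using assms by simp
    thus ?thesis by (metis power_add power_one_right power_add)
  qed
  have key: "- (of_nat i * (inverse x ^ i * inverse x)) - inverse x ^ i / (2 * fF)
      = - ((1 - 2 * of_nat i) * inverse x ^ i / (2 * fF)) - (- 2 * of_nat i) * x ^ (2 * gg - i) * (- 1 / (2 * fF))"
  proof -
    define U where "U = inverse x ^ i"
    have U: "U * x ^ i = 1" unfolding U_def x_def by (rule inv_pow_cancel)
    have "2 * fF * (- (of_nat i * (U * inverse x)) - U / (2 * fF))
          = 2 * fF * (- ((1 - 2 * of_nat i) * U / (2 * fF)) - (- 2 * of_nat i) * x ^ (2 * gg - i) * (- 1 / (2 * fF)))"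
    proof -
      have e1: "2 * fF * (- (of_nat i * (U * inverse x)) - U / (2 * fF)) = - 2 * of_nat i * (U * inverse x * fF) - U"
        using Fnz tnz xnz by (simp add: field_simps)
      have "U * inverse x * fF = U * inverse x * (x ^ (2 * gg - i) * x ^ i * x - x)" using Fdef B by simp
      also have "\<dots> = x ^ (2 * gg - i) * (U * x ^ i) - U" using xnz by (simp add: field_simps)
      also have "\<dots> = x ^ (2 * gg - i) - U" using U by simp
      finally have e2: "U * inverse x * fF = x ^ (2 * gg - i) - U" .
      have "2 * fF * (- (of_nat i * (U * inverse x)) - U / (2 * fF)) = - 2 * of_nat i * (x ^ (2 * gg - i) - U) - U"
        by (simp only: e1 e2)
      moreover have "2 * fF * (- ((1 - 2 * of_nat i) * U / (2 * fF)) - (- 2 * of_nat i) * x ^ (2 * gg - i) * (- 1 / (2 * fF)))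
          = - ((1 - 2 * of_nat i) * U) - 2 * of_nat i * x ^ (2 * gg - i)"
        using Fnz tnz xnz by (simp add: field_simps)
      ultimately show ?thesis by (simp add: algebra_simps)
    qed
    hence "- (of_nat i * (U * inverse x)) - U / (2 * fF)
          = - ((1 - 2 * of_nat i) * U / (2 * fF)) - (- 2 * of_nat i) * x ^ (2 * gg - i) * (- 1 / (2 * fF))"
      using Fnz tnz by simp
    thus ?thesis by (simp add: U_def)
  qed
  have snd: "snd (kd (eta3 i)) = snd (eta1 i - eta2 i)"
  proof -
    have "snd (eta1 i) = - ((1 - 2 * of_nat i) * inverse x ^ i / (2 * fF))"
      using r1 A by (simp add: mult.assoc[symmetric])
    thus ?thesis using lhs r2 key I1 by (simp add: mult.assoc)
  qed
  show ?thesis using fst snd by (simp add: prod_eq_iff)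
qed

end

context cv begin

lemma fconst_m2: "fconst (-2) = (-2 :: 'k rat)" using two_fconst by (simp add: fconst_uminus)

lemma dreg_aff_kY: "dreg_at (Aff a b) (kd kY)"
  unfolding kY_simp by (rule dreg_aff_kd) simp_all

lemma nopole_SS: "a \<noteq> (0::'k) \<Longrightarrow> nopole a SS"
  unfolding SS_inv power_inverse[symmetric] by (intro nopole_power nopole_inverse_fx)

lemma dreg_aff_sInf: "a \<noteq> (0::'k) \<Longrightarrow> dreg_at (Aff a b) (kd sInf)"
  unfolding sInf_SS by (rule dreg_aff_kd) (simp_all add: nopole_SS)

lemma dreg_inf_sInf: "dreg_at Inf (kd (sInf::'k fn))"
proof -
  have "reg_at Inf (sInf :: 'k fn)" using reg_inf_sInf[of 1] by (simp add: sInf_SS)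
  thus ?thesis by (rule dreg_inf_kd)
qed

lemma tw_aff: "onc a b \<Longrightarrow> dreg_at (Aff a b) (tw i)"
proof -
  assume o: "onc a b"
  have "tw i = kmul (fconst (-2) * fx ^ i, 0) (kd kY)"
    using fF_nz two_nz_rat by (simp add: tw_def kd_kY' fconst_m2 field_simps)
  moreover have "reg_at (Aff a b) (fconst (-2) * fx ^ i, 0)" by (rule reg_aff_nopole) (simp_all add: nopole_mult nopole_power)
  ultimately show ?thesis using dreg_aff_mult[OF o _ dreg_aff_kY] by simp
qed

lemma tw_inf: assumes "i < gg" shows "dreg_at Inf (tw i)"
proof -
  define n where "n = gg - 1 - i"
  have xg: "fx ^ (gg - 1) = fx ^ n * (fx ^ i :: 'k rat)"
  proof - have "gg - 1 = n + i" using assms n_def by simp thus ?thesis by (simp add: power_add) qed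
  hence xg': "fx ^ (gg - Suc 0) = fx ^ i * (fx ^ n :: 'k rat)" by (simp add: mult.commute)
  have "kmul (fconst (-2) * inverse fx ^ n, 0) (kd (sInf::'k fn)) = (0, (inverse fx ^ n * fx ^ n) * fx ^ i / fF)"
    using fF_nz two_nz_rat by (simp add: kd_sInf DD_def fconst_m2 xg' field_simps)
  also have "\<dots> = tw i" by (simp add: tw_def inv_pow_cancel divide_inverse)
  finally have e: "tw i = kmul (fconst (-2) * inverse fx ^ n, 0) (kd sInf)" ..
  have "reg_at Inf (fconst (-2) * inverse fx ^ n, 0::'k rat)"
    using binf_mult[OF binf_fconst binf_inv_pow] by (simp add: inf_char)
  thus ?thesis unfolding e by (rule dreg_inf_mult[OF _ dreg_inf_sInf])
qed

lemma ZdR_iff: "(w1, w2, f) \<in> ZdR \<longleftrightarrow> w1 \<in> regOmega U1 \<and> w2 \<in> regOmega U2 \<and> f \<in> regO (U1 \<inter> U2) \<and> kd f = w1 - w2"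
  by (simp add: ZdR_def)

lemma tau_ZdR: assumes "i < gg" shows "tau K i \<in> ZdR"
proof -
  have "tw i \<in> regOmega U1"
    unfolding regOmega_def using U1_cases tw_aff tw_inf[OF assms] by blast
  moreover have "tw i \<in> regOmega U2"
    unfolding regOmega_def using U2_cases tw_aff by blast
  moreover have "(0::'k fn) \<in> regO (U1 \<inter> U2)"
    unfolding regO_def using U12_cases reg_aff_0 by blast
  ultimately show ?thesis by (simp add: tau_eq ZdR_iff)
qed

lemma eta_ZdR: assumes "1 \<le> i" "i \<le> gg" shows "eta K i \<in> ZdR"
proof -
  define c1 :: "'k rat" where "c1 = fconst (of_int (1 - 2 * int i)) * inverse fx ^ (gg + i - 1)"
  define c2 :: "'k rat" where "c2 = fconst (of_int (- 2 * int i)) * fx ^ (2 * gg - i)"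
  have e1: "eta1 i = kmul (c1, 0) (kd sInf)" by (simp add: eta1_def c1_def)
  have e2: "eta2 i = kmul (c2, 0) (kd kY)" by (simp add: eta2_def c2_def)
  have "eta1 i \<in> regOmega U1"
    unfolding regOmega_def
  proof (intro CollectI ballI)
    fix Q :: "'k pt" assume "Q \<in> U1"
    then consider "Q = Inf" | a b where "Q = Aff a b" "onc a b" "a \<noteq> 0" using U1_cases by blast
    thus "dreg_at Q (eta1 i)"
    proof cases
      case 1
      have "reg_at Inf (c1, 0)"
        using binf_mult[OF binf_fconst binf_inv_pow] by (simp add: inf_char c1_def)
      thus ?thesis using 1 e1 dreg_inf_mult[OF _ dreg_inf_sInf] by simp
    next
      case 2
      have "reg_at (Aff a b) (c1, 0)" unfolding c1_def
        using 2 by (intro reg_aff_nopole) (simp_all add: nopole_mult nopole_power nopole_inverse_fx)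
      thus ?thesis using 2 e1 dreg_aff_mult[OF _ _ dreg_aff_sInf] by simp
    qed
  qed
  moreover have "eta2 i \<in> regOmega U2"
    unfolding regOmega_def
  proof (intro CollectI ballI)
    fix Q :: "'k pt" assume "Q \<in> U2"
    then obtain a b where ab: "Q = Aff a b" "onc a b" using U2_cases by blast
    have "reg_at (Aff a b) (c2, 0)" unfolding c2_def
      by (intro reg_aff_nopole) (simp_all add: nopole_mult nopole_power)
    thus "dreg_at Q (eta2 i)" using ab e2 dreg_aff_mult[OF _ _ dreg_aff_kY] by simp
  qed
  moreover have "eta3 i \<in> regO (U1 \<inter> U2)"
    unfolding regO_def
  proof (intro CollectI ballI)
    fix Q :: "'k pt" assume "Q \<in> U1 \<inter> U2"
    then obtain a b where ab: "Q = Aff a b" "onc a b" "a \<noteq> 0" using U12_cases by blast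
    show "reg_at Q (eta3 i)" unfolding eta3_def ab(1)
      using ab by (intro reg_aff_nopole) (simp_all add: nopole_power nopole_inverse_fx)
  qed
  ultimately show ?thesis using eta_cocycle[OF assms] by (simp add: eta_eq[OF assms] ZdR_iff)
qed

end

lemma to_fract_monom: "to_fract (monom c k) = fconst c * (fx ^ k :: 'k::field rat)"
proof -
  have "monom c k = [:c:] * [:0,1:] ^ k" by (simp add: monom_altdef)
  thus ?thesis by (simp only: to_fract_mult fconst_def' to_fract_x_power)
qed

lemma poly_sum_expand:
  fixes P :: "'k::field poly"
  assumes "P = 0 \<or> degree P < n"
  shows "P = (\<Sum>i<n. monom (coeff P i) i)"
proof (cases "n = 0")
  case True thus ?thesis using assms by simp
next
  case False
  hence "{..<n} = {..n - 1}" by auto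
  moreover have "degree P \<le> n - 1" using assms False by auto
  ultimately show ?thesis using poly_as_sum_of_monoms'[of P "n - 1"] by simp
qed

lemma to_fract_expand:
  fixes P :: "'k::field poly"
  assumes "P = 0 \<or> degree P < n"
  shows "to_fract P = (\<Sum>i<n. fconst (coeff P i) * fx ^ i)"
proof -
  have "to_fract P = to_fract (\<Sum>i<n. monom (coeff P i) i)" using poly_sum_expand[OF assms] by simp
  thus ?thesis by (simp add: to_fract_monom)
qed

lemma binf_laurent:
  fixes P :: "'k::field poly"
  assumes "P = 0 \<or> int (degree P) - int m \<le> N"
  shows "binf N (to_fract P / fx ^ m)"
proof (cases "P = 0")
  case True thus ?thesis by simp
next
  case False
  have "fdeg (to_fract P / fx ^ m) = int (degree P) - int m"
    using False by (simp add: divide_inverse fdeg_mult fdeg_inverse fdeg_to_fract fdeg_power fdeg_fx)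
  thus ?thesis using assms False by (simp add: binf_def)
qed

context cv begin

definition Pe :: "(nat \<Rightarrow> 'k) \<Rightarrow> 'k poly" where "Pe e = (\<Sum>i\<in>{1..gg}. monom (e i) (gg - i))"

lemma Pe_eval: "to_fract (Pe e) / fx ^ gg = (\<Sum>i\<in>{1..gg}. fconst (e i) * inverse fx ^ i)"
proof -
  have "to_fract (Pe e) / fx ^ gg = (\<Sum>i\<in>{1..gg}. fconst (e i) * fx ^ (gg - i) / fx ^ gg)"
    by (simp add: Pe_def to_fract_monom sum_divide_distrib)
  also have "\<dots> = (\<Sum>i\<in>{1..gg}. fconst (e i) * inverse fx ^ i)"
  proof (rule sum.cong)
    fix i assume "i \<in> {1..gg}"
    hence "fx ^ gg = fx ^ (gg - i) * (fx ^ i :: 'k rat)" by (simp flip: power_add)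
    thus "fconst (e i) * fx ^ (gg - i) / fx ^ gg = fconst (e i) * inverse fx ^ i"
      by (simp add: field_simps power_inverse)
  qed simp
  finally show ?thesis .
qed

lemma coeff_Pe: "coeff (Pe e) k = (if k < gg then e (gg - k) else 0)"
proof -
  have "coeff (Pe e) k = (\<Sum>i\<in>{1..gg}. if gg - i = k then e i else 0)"
    by (simp add: Pe_def coeff_sum coeff_monom)
  also have "\<dots> = (\<Sum>i\<in>{1..gg}. if i = gg - k \<and> k < gg then e i else 0)"
    by (rule sum.cong) auto
  also have "\<dots> = (if k < gg then e (gg - k) else 0)"
  proof (cases "k < gg")
    case True
    hence "gg - k \<in> {1..gg}" by auto
    thus ?thesis using True by (simp add: sum.delta')
  next
    case False thus ?thesis by simp
  qed
  finally show ?thesis .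
qed

lemma Pe_coeff: assumes "Q = 0 \<or> degree Q < gg" shows "Pe (\<lambda>i. coeff Q (gg - i)) = Q"
proof (rule poly_eqI)
  fix k show "coeff (Pe (\<lambda>i. coeff Q (gg - i))) k = coeff Q k"
  proof (cases "k < gg")
    case True thus ?thesis by (simp add: coeff_Pe)
  next
    case False
    hence "coeff Q k = 0" using assms by (auto intro: coeff_eq_0)
    thus ?thesis using False by (simp add: coeff_Pe)
  qed
qed

end

lemma tsmul_simp: "tsmul c (a, b, d) = (ksmul c a, ksmul c b, ksmul c d)" by (simp add: tsmul_def)

lemma sum_triple: "(\<Sum>i\<in>A. (f i, g i, h i)) = (sum f A, sum g A, sum h A)"
  by (induct A rule: infinite_finite_induct) (simp_all add: zero_prod_def)

lemma kd_sum: "kd (sum f A) = (\<Sum>i\<in>A. kd (f i :: 'k::field fn))"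
  by (induct A rule: infinite_finite_induct) (simp_all add: kd_add)

lemma X_pow_degree: "degree ([:0,1::'k::field:] ^ m) = m" by (simp add: degree_power_eq)

lemma mod_X_pow: "(P::'k::field poly) mod [:0,1:] ^ m = 0 \<or> degree (P mod [:0,1:] ^ m) < m"
  using degree_mod_less[of "[:0,1:] ^ m" P] by (simp add: X_pow_degree)

context cv begin

lemma sum_tau: "(\<Sum>i<gg. tsmul (c i) (tau K i)) = (\<Sum>i<gg. ksmul (c i) (tw i), \<Sum>i<gg. ksmul (c i) (tw i), 0)"
  by (simp add: tau_eq tsmul_simp sum_triple)

lemma sum_eta: "(\<Sum>i=1..gg. tsmul (e i) (eta K i)) =
   (\<Sum>i=1..gg. ksmul (e i) (eta1 i), \<Sum>i=1..gg. ksmul (e i) (eta2 i), \<Sum>i=1..gg. ksmul (e i) (eta3 i))"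
proof -
  have "(\<Sum>i=1..gg. tsmul (e i) (eta K i)) = (\<Sum>i=1..gg. (ksmul (e i) (eta1 i), ksmul (e i) (eta2 i), ksmul (e i) (eta3 i)))"
    by (rule sum.cong) (simp_all add: eta_eq tsmul_simp)
  thus ?thesis by (simp add: sum_triple)
qed

lemma sum_eta3: "(\<Sum>i=1..gg. ksmul (e i) (eta3 i)) = (0, to_fract (Pe e) / fx ^ gg)"
proof -
  have "(\<Sum>i=1..gg. ksmul (e i) (eta3 i)) = (\<Sum>i=1..gg. (0, fconst (e i) * inverse fx ^ i))"
    by (simp add: eta3_def)
  also have "\<dots> = (0, \<Sum>i=1..gg. fconst (e i) * inverse fx ^ i)"
    by (simp add: prod_eq_iff fst_sum snd_sum)
  finally show ?thesis by (simp add: Pe_eval)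
qed

lemma sum_tw: "(\<Sum>i<n. ksmul (c i) (tw i)) = (0, (\<Sum>i<n. fconst (c i) * fx ^ i) * inverse fF)"
proof -
  have "(\<Sum>i<n. ksmul (c i) (tw i)) = (\<Sum>i<n. (0, fconst (c i) * fx ^ i * inverse fF))"
    by (simp add: tw_def mult.assoc)
  also have "\<dots> = (0, (\<Sum>i<n. fconst (c i) * fx ^ i) * inverse fF)"
    by (simp add: prod_eq_iff fst_sum snd_sum sum_distrib_right)
  finally show ?thesis .
qed

lemma eta1_U1: "1 \<le> i \<Longrightarrow> i \<le> gg \<Longrightarrow> eta1 i \<in> regOmega U1"
  using eta_ZdR[of i] by (simp add: eta_eq ZdR_iff)
lemma eta2_U2: "1 \<le> i \<Longrightarrow> i \<le> gg \<Longrightarrow> eta2 i \<in> regOmega U2"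
  using eta_ZdR[of i] by (simp add: eta_eq ZdR_iff)

end

context cv begin

lemma laurent_shift:
  assumes "f = (to_fract A0 / fx ^ m0, to_fract B0 / fx ^ m0)"
  shows "f = (to_fract (A0 * [:0,1:] ^ gg) / fx ^ (m0 + gg), to_fract (B0 * [:0,1:] ^ gg) / fx ^ (m0 + gg) :: 'k rat)"
  using assms by (simp add: to_fract_x_power power_add)

lemma f_decomp:
  fixes f :: "'k fn"
  assumes f_reg: "f \<in> regO (U1 \<inter> U2)"
  shows "\<exists>e f1 f2. f1 \<in> regO U1 \<and> f2 \<in> regO U2 \<and> f - (\<Sum>i=1..gg. ksmul (e i) (eta3 i)) = f1 - f2
     \<and> (\<exists>A B. f2 = (to_fract A, to_fract B))"
proof -
  have "\<forall>a b. onc a b \<and> a \<noteq> 0 \<longrightarrow> reg_at (Aff a b) f"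
    using f_reg Aff_U1 Aff_U2 by (auto simp: regO_def)
  then obtain A0 B0 m0 where "f = (to_fract A0 / fx ^ m0, to_fract B0 / fx ^ m0)" using laurent_of_reg by blast
  then obtain A B m where f: "f = (to_fract A / fx ^ m, to_fract B / fx ^ m)" and mg: "m \<ge> gg"
    using laurent_shift by (metis le_add2)
  define X :: "'k poly" where "X = [:0,1:]"
  define Ad Am Bd Bm where "Ad = A div X ^ m" and "Am = A mod X ^ m" and "Bd = B div X ^ m" and "Bm = B mod X ^ m"
  define Q R where "Q = Bm div X ^ (m - gg)" and "R = Bm mod X ^ (m - gg)"
  have Aeq: "A = Ad * X ^ m + Am" unfolding Ad_def Am_def by (rule div_mult_mod_eq[symmetric])
  have Bmeq0: "Bm = Q * X ^ (m - gg) + R" unfolding Q_def R_def by (rule div_mult_mod_eq[symmetric])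
  have "B = Bd * X ^ m + Bm" unfolding Bd_def Bm_def by (rule div_mult_mod_eq[symmetric])
  hence Beq: "B = Bd * X ^ m + Q * X ^ (m - gg) + R" using Bmeq0 by (simp add: add.assoc)
  have Am: "Am = 0 \<or> degree Am < m" using mod_X_pow[of A m] by (simp add: Am_def X_def)
  have Bm: "Bm = 0 \<or> degree Bm < m" using mod_X_pow[of B m] by (simp add: Bm_def X_def)
  have R: "R = 0 \<or> degree R < m - gg" using mod_X_pow[of Bm "m - gg"] by (simp add: R_def X_def)
  have Qd: "Q = 0 \<or> degree Q < gg"
  proof (cases "Q = 0")
    case False
    have Bmeq: "Bm = Q * X ^ (m - gg) + R" by (rule Bmeq0)
    have dQX: "degree (Q * X ^ (m - gg)) = degree Q + (m - gg)"
      using False by (simp add: degree_mult_eq X_def X_pow_degree)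
    have "degree Bm = degree Q + (m - gg)"
    proof (cases "R = 0")
      case True thus ?thesis using Bmeq dQX by simp
    next
      case False
      hence "degree R < degree (Q * X ^ (m - gg))" using R dQX by auto
      thus ?thesis using Bmeq dQX by (simp add: degree_add_eq_left)
    qed
    moreover have "Bm \<noteq> 0"
    proof
      assume "Bm = 0" hence "Q = 0" by (simp add: Q_def) thus False using False by simp
    qed
    ultimately show ?thesis using Bm mg by auto
  qed simp
  define e where "e = (\<lambda>i. coeff Q (gg - i))"
  have PeQ: "Pe e = Q" unfolding e_def by (rule Pe_coeff[OF Qd])
  define f1 where "f1 = (to_fract Am / fx ^ m, to_fract R / fx ^ m :: 'k rat)"
  define f2 where "f2 = (- to_fract Ad, - to_fract Bd :: 'k rat)"
  have xm: "fx ^ m \<noteq> (0::'k rat)" by simp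
  have dec: "f - (\<Sum>i=1..gg. ksmul (e i) (eta3 i)) = f1 - f2"
  proof -
    have "to_fract A / fx ^ m = to_fract Ad + to_fract Am / fx ^ m"
      using xm by (simp add: Aeq X_def to_fract_x_power field_simps)
    moreover have "to_fract B / fx ^ m - to_fract Q / fx ^ gg = to_fract R / fx ^ m + to_fract Bd"
    proof -
      have "fx ^ m = fx ^ (m - gg) * (fx ^ gg :: 'k rat)" using mg by (simp flip: power_add)
      thus ?thesis using xm by (simp add: Beq X_def to_fract_x_power field_simps)
    qed
    moreover have s3: "(\<Sum>i=1..gg. ksmul (e i) (eta3 i)) = (0, to_fract Q / fx ^ gg)"
      using sum_eta3[of e] PeQ by simp
    ultimately show ?thesis unfolding s3 f f1_def f2_def by (simp add: algebra_simps)
  qed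
  have f1_reg: "f1 \<in> regO U1"
    unfolding regO_def
  proof (intro CollectI ballI)
    fix P :: "'k pt" assume "P \<in> U1"
    then consider "P = Inf" | a b where "P = Aff a b" "onc a b" "a \<noteq> 0" using U1_cases by blast
    thus "reg_at P f1"
    proof cases
      case 1
      have b1: "binf 0 (to_fract Am / fx ^ m)" using Am by (intro binf_laurent) auto
      have b2: "binf 0 (to_fract (R * X ^ (gg + 1)) / fx ^ m)"
      proof (rule binf_laurent)
        show "R * X ^ (gg + 1) = 0 \<or> int (degree (R * X ^ (gg + 1))) - int m \<le> 0"
        proof (cases "R = 0")
          case False
          hence "degree (R * X ^ (gg + 1)) = degree R + (gg + 1)" by (simp add: degree_mult_eq X_def X_pow_degree)
          thus ?thesis using R False mg by auto
        qed simp
      qed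
      have e: "to_fract (R * X ^ (gg + 1)) / fx ^ m = to_fract R / fx ^ m * fx ^ (gg + 1)"
      proof -
        have "to_fract (R * X ^ (gg + 1)) = to_fract R * fx ^ (gg + 1)"
          unfolding X_def by (simp only: to_fract_mult to_fract_x_power)
        thus ?thesis by simp
      qed
      have b2': "binf 0 (to_fract R / fx ^ m * fx ^ (gg + 1))" using b2 unfolding e .
      show ?thesis unfolding 1 f1_def inf_char using b1 b2' by blast
    next
      case 2
      have "nopole a (to_fract Am / fx ^ m)" "nopole a (to_fract R / fx ^ m)"
        using 2 by (simp_all add: nopole_laurent)
      thus ?thesis unfolding f1_def 2 by (rule reg_aff_nopole)
    qed
  qed
  have f2_reg: "f2 \<in> regO U2"
    unfolding regO_def
  proof (intro CollectI ballI)
    fix P :: "'k pt" assume "P \<in> U2"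
    then obtain a b where "P = Aff a b" using U2_cases by blast
    thus "reg_at P f2" unfolding f2_def by (simp add: reg_aff_nopole nopole_uminus)
  qed
  have "f2 = (to_fract (- Ad), to_fract (- Bd))" by (simp add: f2_def)
  thus ?thesis using f1_reg f2_reg dec by blast
qed

end

context cv begin

lemma kd_Sum_eta3: "kd (\<Sum>i=1..gg. ksmul (e i) (eta3 i)) = (\<Sum>i=1..gg. ksmul (e i) (eta1 i)) - (\<Sum>i=1..gg. ksmul (e i) (eta2 i))"
proof -
  have "kd (\<Sum>i=1..gg. ksmul (e i) (eta3 i)) = (\<Sum>i=1..gg. ksmul (e i) (eta1 i) - ksmul (e i) (eta2 i))"
    unfolding kd_sum by (rule sum.cong) (simp_all add: kd_ksmul eta_cocycle ksmul_diff)
  thus ?thesis by (simp add: sum_subtractf)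
qed

lemma global_form:
  fixes W :: "'k fn"
  assumes aff: "\<And>a b. onc a b \<Longrightarrow> dreg_at (Aff a b) W" and inf: "dreg_at Inf W"
  shows "\<exists>P. (P = 0 \<or> degree P < gg) \<and> W = (0, to_fract P * inverse fF)"
proof -
  define H where "H = kmul W kY"
  have "\<forall>a b. onc a b \<longrightarrow> reg_at (Aff a b) H" using aff dreg_aff_H H_def by blast
  then obtain P P2 where HP: "H = (to_fract P, to_fract P2)" using poly_of_reg by blast
  obtain \<gamma> where g: "reg_at Inf \<gamma>" "W = kmul \<gamma> (kd sInf)" using dreg_inf_form[OF inf] by blast
  define c :: "'k rat" where "c = fconst (-2) * inverse fx ^ (gg - 1)"
  have cnz: "c \<noteq> 0" using two_nz by (simp add: c_def)
  have "kmul H (c, 0) = \<gamma>"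
  proof -
    have d: "kmul (kd sInf) kY = (DD * fF, 0)" by (simp add: kd_sInf kY_simp)
    have "DD * fF * c = 1"
    proof -
      have "DD * fF * c = fx ^ (gg - 1) * inverse fx ^ (gg - 1) * (fconst (-2) * (- 1 / 2))"
        using fF_nz two_nz_rat by (simp add: DD_def c_def field_simps)
      also have "fconst (-2) * (- 1 / 2) = (1::'k rat)" using fconst_m2 two_nz_rat by simp
      finally show ?thesis using inv_pow_cancel[of "gg - 1"] by (simp add: mult.commute)
    qed
    hence "kmul (DD * fF, 0) (c, 0) = (1, 0)" by simp
    thus ?thesis unfolding H_def g(2) by (simp only: kmul_assoc d) (metis kmul_comm kmul_1_left)
  qed
  hence reg: "reg_at Inf (to_fract P * c, to_fract P2 * c)" using g(1) HP by simp
  have fc: "fdeg c = - int (gg - 1)"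
    using two_nz by (simp add: c_def fdeg_mult fdeg_fconst fdeg_power fdeg_inverse fdeg_fx)
  have Pd: "P = 0 \<or> degree P < gg"
  proof (cases "P = 0")
    case False
    have "binf 0 (to_fract P * c)" using reg by (simp add: inf_char)
    hence "int (degree P) - int (gg - 1) \<le> 0" using False cnz fc by (simp add: binf_def fdeg_mult fdeg_to_fract)
    thus ?thesis using gg_pos by auto
  qed simp
  have P2: "P2 = 0"
  proof (rule ccontr)
    assume nz: "P2 \<noteq> 0"
    have "binf 0 (to_fract P2 * c * fx ^ (gg + 1))" using reg by (simp add: inf_char)
    moreover have "fdeg (to_fract P2 * c * fx ^ (gg + 1)) = int (degree P2) + 2"
      using nz cnz fc gg_pos by (simp add: fdeg_mult fdeg_to_fract fdeg_power fdeg_fx)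
    ultimately show False using nz cnz by (simp add: binf_def)
  qed
  have "W = kmul H (kinv kY)"
  proof -
    have "kmul kY (kinv kY) = (1, 0::'k rat)" using fF_nz by (simp only: kinv_kY) (simp add: kY_simp)
    hence "kmul W (kmul kY (kinv kY)) = W" by (subst kmul_comm) simp
    thus ?thesis unfolding H_def by (simp only: kmul_assoc)
  qed
  hence "W = (0, to_fract P * inverse fF)" using HP P2 by (simp add: kinv_kY)
  thus ?thesis using Pd by blast
qed

lemma spanning:
  assumes "z \<in> (ZdR :: 'k triple set)"
  shows "\<exists>c e. z - (\<Sum>i<gg. tsmul (c i) (tau K i)) - (\<Sum>i=1..gg. tsmul (e i) (eta K i)) \<in> BdR"
proof -
  obtain w1 w2 f where z: "z = (w1, w2, f)" by (cases z)
  have hw1: "w1 \<in> regOmega U1" and hw2: "w2 \<in> regOmega U2" and hf: "f \<in> regO (U1 \<inter> U2)"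
    and hd: "kd f = w1 - w2" using assms z by (simp_all add: ZdR_iff)
  obtain e f1 f2 A B where f1: "f1 \<in> regO U1" and f2: "f2 \<in> regO U2"
    and dec: "f - (\<Sum>i=1..gg. ksmul (e i) (eta3 i)) = f1 - f2" and f2AB: "f2 = (to_fract A, to_fract B)"
    using f_decomp[OF hf] by blast
  define S1 S2 E3 where "S1 = (\<Sum>i=1..gg. ksmul (e i) (eta1 i))" and "S2 = (\<Sum>i=1..gg. ksmul (e i) (eta2 i))"
    and "E3 = (\<Sum>i=1..gg. ksmul (e i) (eta3 i))"
  define W where "W = w2 - S2 - kd f2"
  have W1: "W = w1 - S1 - kd f1"
  proof -
    have "kd f - kd E3 = kd f1 - kd f2" using dec by (simp add: E3_def kd_diff[symmetric])
    hence "w1 - w2 - (S1 - S2) = kd f1 - kd f2" using hd kd_Sum_eta3[of e] by (simp add: E3_def S1_def S2_def)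
    thus ?thesis by (simp add: W_def algebra_simps)
  qed
  have aff: "dreg_at (Aff a b) W" if o: "onc a b" for a b
  proof -
    have "dreg_at (Aff a b) w2" using hw2 Aff_U2[OF o] by (simp add: regOmega_def)
    moreover have "dreg_at (Aff a b) S2" unfolding S2_def
      using eta2_U2 Aff_U2[OF o] by (intro dreg_aff_sum[OF o] dreg_aff_ksmul[OF o]) (auto simp: regOmega_def)
    moreover have "dreg_at (Aff a b) (kd f2)" unfolding f2AB by (rule dreg_aff_kd) simp_all
    ultimately show ?thesis unfolding W_def using o by (intro dreg_aff_diff) auto
  qed
  have inf: "dreg_at Inf W"
  proof -
    have "dreg_at Inf w1" using hw1 Inf_U1 by (simp add: regOmega_def)
    moreover have "dreg_at Inf S1" unfolding S1_def
      using eta1_U1 Inf_U1 by (intro dreg_inf_sum dreg_inf_ksmul) (auto simp: regOmega_def)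
    moreover have "dreg_at Inf (kd f1)" using f1 Inf_U1 by (intro dreg_inf_kd) (simp add: regO_def)
    ultimately show ?thesis unfolding W1 by (intro dreg_inf_diff) auto
  qed
  obtain P where P: "P = 0 \<or> degree P < gg" and WP: "W = (0, to_fract P * inverse fF)"
    using global_form[OF aff inf] by blast
  define c where "c = (\<lambda>i. coeff P i)"
  have tw: "(\<Sum>i<gg. ksmul (c i) (tw i)) = W"
    unfolding sum_tw WP c_def using to_fract_expand[OF P] by simp
  have "z - (\<Sum>i<gg. tsmul (c i) (tau K i)) - (\<Sum>i=1..gg. tsmul (e i) (eta K i)) = (kd f1, kd f2, f1 - f2)"
    unfolding sum_tau sum_eta tw z
    using W1 dec by (simp add: W_def S1_def S2_def algebra_simps)
  moreover have "(kd f1, kd f2, f1 - f2) \<in> BdR" unfolding BdR_def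
    by (rule CollectI, rule exI[of _ f1], rule exI[of _ f2]) (simp add: f1 f2)
  ultimately have "z - (\<Sum>i<gg. tsmul (c i) (tau K i)) - (\<Sum>i=1..gg. tsmul (e i) (eta K i)) \<in> BdR" by simp
  thus ?thesis by blast
qed

end

lemma coeff_sum_monoms: "coeff (\<Sum>i<n. monom (c i) i) k = (if k < n then c k else 0)"
  by (simp add: coeff_sum coeff_monom)

lemma to_fract_sum_monoms: "to_fract (\<Sum>i<n. monom (c i) i) = (\<Sum>i<n. fconst (c i) * (fx ^ i :: 'k::field rat))"
  by (simp add: to_fract_monom)

context cv begin

lemma Pe_zero: "Pe (\<lambda>i. 0) = 0" by (simp add: Pe_def)

lemma independence:
  assumes "(\<Sum>i<gg. tsmul (c i) (tau K i)) + (\<Sum>i=1..gg. tsmul (e i) (eta K i)) \<in> (BdR :: 'k triple set)"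
  shows "(\<forall>i<gg. c i = 0) \<and> (\<forall>i\<in>{1..gg}. e i = 0)"
proof -
  define T where "T = (\<Sum>i<gg. ksmul (c i) (tw i))"
  define S1 S2 where "S1 = (\<Sum>i=1..gg. ksmul (e i) (eta1 i))" and "S2 = (\<Sum>i=1..gg. ksmul (e i) (eta2 i))"
  have lhs: "(\<Sum>i<gg. tsmul (c i) (tau K i)) + (\<Sum>i=1..gg. tsmul (e i) (eta K i))
      = (T + S1, T + S2, (0, to_fract (Pe e) / fx ^ gg))"
    unfolding sum_tau sum_eta sum_eta3 T_def S1_def S2_def by simp
  obtain f1 f2 where f1: "f1 \<in> regO U1" and f2: "f2 \<in> regO U2"
    and e1: "T + S1 = kd f1" and e2: "T + S2 = kd f2" and e3: "(0, to_fract (Pe e) / fx ^ gg) = f1 - f2"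
    using assms unfolding lhs BdR_def by blast
  have "\<forall>a b. onc a b \<longrightarrow> reg_at (Aff a b) f2" using f2 Aff_U2 by (auto simp: regO_def)
  then obtain P Q where f2PQ: "f2 = (to_fract P, to_fract Q)" using poly_of_reg by blast
  have f1eq: "f1 = (to_fract P, to_fract Q + to_fract (Pe e) / fx ^ gg)" using e3 f2PQ
    by (simp add: prod_eq_iff algebra_simps)
  have reg: "reg_at Inf f1" using f1 Inf_U1 by (simp add: regO_def)
  define N where "N = (Q * [:0,1:] ^ gg + Pe e) * [:0,1:]"
  have Neq: "(to_fract Q + to_fract (Pe e) / fx ^ gg) * fx ^ (gg + 1) = to_fract N"
  proof -
    have "to_fract N = (to_fract Q * fx ^ gg + to_fract (Pe e)) * fx"
      unfolding N_def by (simp only: to_fract_mult to_fract_add to_fract_x_power fx_def')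
    thus ?thesis by (simp add: field_simps power_add)
  qed
  have bN: "binf 0 (to_fract N)" using reg Neq by (simp add: f1eq inf_char)
  have N0: "N = 0"
  proof (rule ccontr)
    assume "N \<noteq> 0"
    moreover hence "degree N \<ge> 1"
    proof -
      assume nz: "N \<noteq> 0"
      hence "Q * [:0,1:] ^ gg + Pe e \<noteq> 0" by (auto simp: N_def)
      thus ?thesis by (simp add: N_def degree_mult_eq)
    qed
    ultimately show False using bN by (simp add: binf_def fdeg_to_fract)
  qed
  hence QP: "Q * [:0,1:] ^ gg + Pe e = 0" by (simp add: N_def)
  have ez: "\<forall>i\<in>{1..gg}. e i = 0"
  proof
    fix i assume i: "i \<in> {1..gg}"
    have "coeff (Q * [:0,1:] ^ gg + Pe e) (gg - i) = 0" using QP by simp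
    moreover have "coeff (Q * [:0,1:] ^ gg) (gg - i) = 0"
    proof -
      have h: "Q * [:0,1:] ^ gg = monom 1 gg * Q" by (simp add: monom_altdef mult.commute)
      show ?thesis unfolding h using i by (simp add: coeff_monom_mult)
    qed
    ultimately have "coeff (Pe e) (gg - i) = 0" by simp
    thus "e i = 0" using i by (simp add: coeff_Pe)
  qed
  hence "Pe e = 0" using Pe_zero by (simp add: Pe_def)
  hence "Q = 0" using QP by simp
  have "binf 0 (to_fract P)" using reg by (simp add: f1eq inf_char)
  hence "degree P = 0" by (cases "P = 0") (auto simp: binf_def fdeg_to_fract)
  then obtain p0 where "P = [:p0:]" by (metis degree_eq_zeroE)
  hence "pderiv P = 0" by simp
  hence "kd f2 = 0" using \<open>Q = 0\<close> by (simp add: f2PQ kd_simp zero_prod_def)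
  moreover have "S2 = 0" using ez by (simp add: S2_def)
  ultimately have "T = 0" using e2 by simp
  hence "(\<Sum>i<gg. fconst (c i) * fx ^ i) * inverse fF = (0::'k rat)" unfolding T_def sum_tw by (simp add: zero_prod_def)
  hence "(\<Sum>i<gg. fconst (c i) * fx ^ i) = (0::'k rat)" using fF_nz by simp
  hence "to_fract (\<Sum>i<gg. monom (c i) i) = 0" by (simp only: to_fract_sum_monoms)
  hence "(\<Sum>i<gg. monom (c i) i) = 0" by (simp only: to_fract_eq_0_iff)
  hence "\<forall>i<gg. c i = 0"
  proof (intro allI impI)
    fix k assume z: "(\<Sum>i<gg. monom (c i) i) = 0" and k: "k < gg"
    have "coeff (\<Sum>i<gg. monom (c i) i) k = c k" using k by (simp only: coeff_sum_monoms) simp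
    moreover have "coeff (\<Sum>i<gg. monom (c i) i) k = 0" using z by simp
    ultimately show "c k = 0" by simp
  qed
  thus ?thesis using ez by blast
qed

end

theorem lemma3p2:
  fixes K :: "'k::alg_closed_field itself"
  assumes "CHAR('k) > 2"
  shows "(\<forall>i < genus K. tau K i \<in> ZdR) \<and> (\<forall>i \<in> {1..genus K}. eta K i \<in> ZdR) \<and>
    (\<forall>z \<in> (ZdR :: 'k triple set). \<exists>c e.
       z - (\<Sum>i<genus K. tsmul (c i) (tau K i)) - (\<Sum>i=1..genus K. tsmul (e i) (eta K i)) \<in> BdR) \<and>
    (\<forall>c e. (\<Sum>i<genus K. tsmul (c i) (tau K i)) + (\<Sum>i=1..genus K. tsmul (e i) (eta K i)) \<in> (BdR :: 'k triple set)
       \<longrightarrow> (\<forall>i < genus K. c i = 0) \<and> (\<forall>i \<in> {1..genus K}. e i = 0))"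
proof -
  interpret cv K using assms by unfold_locales
  have g: "genus K = gg" by (rule genus_eq)
  show ?thesis unfolding g
    using tau_ZdR eta_ZdR spanning independence by auto
qed

end
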